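(* Let $G>I$ be a finite group with $Z(G)=I$ and $\sigma_1,\sigma_2\in G$ with $G=\langle\sigma_1,\sigma_2\rangle$, $o(\sigma_1\sigma_2\sigma_1)=2$, $\sigma_1\sigma_2\sigma_1=\sigma_2\sigma_1\sigma_2$, $C=[\sigma_1]$, $D=[\sigma_2\sigma_1]$, and $[\underline{\sigma}]=[\sigma_1,\sigma_2,\sigma_1,\sigma_1,\sigma_2\sigma_1]$. Then $Z_9=[\underline{\sigma}]^{B_5}\subseteq\Sigma^i(C,C,C,C,D)$ is an orbit of length $9$ under the action of $B_5$ such that $\rho_5(\beta_{ij})$ has cycle type $(1)^3(3)^2$ for $1\le i<j\le 4$, $\rho_5(\beta_{i5})$ has cycle type $(1)(2)^4$ for $1\le i<5$, $\rho_5(B_5)\cong((C_3\times C_3)\rtimes Q_8)\rtimes C_3$, and the genus is $g_{Z_9}=0$.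
   Context: $\iota$ is the identity and $I$ the trivial group; $Q_8$ is the quaternion group of order $8$. For conjugacy classes $C_1,\dots,C_m$, $\Sigma^i(C_1,\dots,C_m)$ is the set of $G$-conjugacy classes $[\sigma_1,\dots,\sigma_m]$ (simultaneous conjugation) of tuples with $\sigma_j\in C_j$, $\langle\sigma_1,\dots,\sigma_m\rangle=G$, $\sigma_1\cdots\sigma_m=\iota$. The Hurwitz braid group $H_m$ generated by $\beta_2,\dots,\beta_m$ acts from the right by $[\underline{\sigma}]^{\beta_i}=[\sigma_1,\dots,\sigma_{i-2},\sigma_{i-1}\sigma_i\sigma_{i-1}^{-1},\sigma_{i-1},\sigma_{i+1},\dots,\sigma_m]$. The pure braid group $B_m$ is generated by $\beta_{ij}=\beta_{i+1}^{-1}\cdots\beta_{j-1}^{-1}\beta_j^2\beta_{j-1}\cdots\beta_{i+1}$, $1\le i<j\le m$, and $\rho_m$ is the induced permutation representation on the orbit. For a $B_m$-orbit $Z$, $g_Z=1-|Z|+\frac12\big((m-1)|Z|-\sum_{j=2}^m z_{1j}\big)$ with $z_{1j}$ the number of cycles (fixed points included) of $\rho_m(\beta_{1j})$ on $Z$. *)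

theory Defs
  imports "HOL-Algebra.Algebra" "HOL-Library.Multiset"
begin

definition center :: "('a, 'b) monoid_scheme \<Rightarrow> 'a set" where
  "center G = {z \<in> carrier G. \<forall>g \<in> carrier G. z \<otimes>\<^bsub>G\<^esub> g = g \<otimes>\<^bsub>G\<^esub> z}"

definition conj_class :: "('a, 'b) monoid_scheme \<Rightarrow> 'a \<Rightarrow> 'a set" where
  "conj_class G x = {g \<otimes>\<^bsub>G\<^esub> x \<otimes>\<^bsub>G\<^esub> inv\<^bsub>G\<^esub> g | g. g \<in> carrier G}"

definition tuple_prod :: "('a, 'b) monoid_scheme \<Rightarrow> 'a list \<Rightarrow> 'a" where
  "tuple_prod G xs = foldr (\<lambda>x acc. x \<otimes>\<^bsub>G\<^esub> acc) xs \<one>\<^bsub>G\<^esub>"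

definition tuple_class :: "('a, 'b) monoid_scheme \<Rightarrow> 'a list \<Rightarrow> 'a list set" where
  "tuple_class G s = {map (\<lambda>x. g \<otimes>\<^bsub>G\<^esub> x \<otimes>\<^bsub>G\<^esub> inv\<^bsub>G\<^esub> g) s | g. g \<in> carrier G}"

definition Sigma_i :: "('a, 'b) monoid_scheme \<Rightarrow> 'a set list \<Rightarrow> 'a list set set" where
  "Sigma_i G Cs = {tuple_class G s | s. length s = length Cs
      \<and> (\<forall>j < length Cs. s ! j \<in> Cs ! j)
      \<and> set s \<subseteq> carrier G
      \<and> generate G (set s) = carrier G
      \<and> tuple_prod G s = \<one>\<^bsub>G\<^esub>}"

text \<open>A letter (i, True) is beta_i, (i, False) is beta_i^{-1}, for 2 <= i <= m (1-based indices).
  beta_i: (.., s_{i-1}, s_i, ..) |-> (.., s_{i-1} s_i s_{i-1}^{-1}, s_{i-1}, ..).\<close>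
definition hur_letter :: "('a, 'b) monoid_scheme \<Rightarrow> nat \<times> bool \<Rightarrow> 'a list \<Rightarrow> 'a list" where
  "hur_letter G l s = (let i = fst l; a = s ! (i - 2); b = s ! (i - 1) in
     if 2 \<le> i \<and> i \<le> length s then
       (if snd l then s[i - 2 := a \<otimes>\<^bsub>G\<^esub> b \<otimes>\<^bsub>G\<^esub> inv\<^bsub>G\<^esub> a, i - 1 := a]
        else s[i - 2 := b, i - 1 := inv\<^bsub>G\<^esub> b \<otimes>\<^bsub>G\<^esub> a \<otimes>\<^bsub>G\<^esub> b])
     else s)"

definition hur_word :: "('a, 'b) monoid_scheme \<Rightarrow> (nat \<times> bool) list \<Rightarrow> 'a list \<Rightarrow> 'a list" where
  "hur_word G w s = fold (hur_letter G) w s"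

text \<open>Action on simultaneous conjugacy classes (images of classes are classes).\<close>
definition hur_word_cls :: "('a, 'b) monoid_scheme \<Rightarrow> (nat \<times> bool) list \<Rightarrow> 'a list set \<Rightarrow> 'a list set" where
  "hur_word_cls G w Y = image (hur_word G w) Y"

definition beta_word :: "nat \<Rightarrow> nat \<Rightarrow> (nat \<times> bool) list" where
  "beta_word i j = map (\<lambda>k. (k, False)) [i+1..<j] @ [(j, True), (j, True)]
                   @ map (\<lambda>k. (k, True)) (rev [i+1..<j])"

definition inv_word :: "(nat \<times> bool) list \<Rightarrow> (nat \<times> bool) list" where
  "inv_word w = rev (map (\<lambda>(k, e). (k, \<not> e)) w)"

inductive_set pure_orbit :: "('a, 'b) monoid_scheme \<Rightarrow> nat \<Rightarrow> 'a list set \<Rightarrow> 'a list set set"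
  for G m Y0 where
  base: "Y0 \<in> pure_orbit G m Y0"
| step: "Y \<in> pure_orbit G m Y0 \<Longrightarrow> 1 \<le> i \<Longrightarrow> i < j \<Longrightarrow> j \<le> m
          \<Longrightarrow> hur_word_cls G (beta_word i j) Y \<in> pure_orbit G m Y0"
| step_inv: "Y \<in> pure_orbit G m Y0 \<Longrightarrow> 1 \<le> i \<Longrightarrow> i < j \<Longrightarrow> j \<le> m
          \<Longrightarrow> hur_word_cls G (inv_word (beta_word i j)) Y \<in> pure_orbit G m Y0"

definition rho_beta :: "('a, 'b) monoid_scheme \<Rightarrow> 'a list set set \<Rightarrow> nat \<Rightarrow> nat \<Rightarrow> 'a list set \<Rightarrow> 'a list set" where
  "rho_beta G Z i j = restrict (hur_word_cls G (beta_word i j)) Z"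

definition rho_image :: "('a, 'b) monoid_scheme \<Rightarrow> nat \<Rightarrow> 'a list set set \<Rightarrow> ('a list set \<Rightarrow> 'a list set) monoid" where
  "rho_image G m Z = (BijGroup Z)\<lparr>carrier := generate (BijGroup Z)
      {rho_beta G Z i j | i j. 1 \<le> i \<and> i < j \<and> j \<le> m}\<rparr>"

definition cycles_of :: "('c \<Rightarrow> 'c) \<Rightarrow> 'c set \<Rightarrow> 'c set set" where
  "cycles_of f Z = {{(f ^^ n) x | n. True} | x. x \<in> Z}"

text \<open>Cycle type as the multiset of cycle lengths (fixed points counted as 1-cycles).\<close>
definition cycle_type :: "('c \<Rightarrow> 'c) \<Rightarrow> 'c set \<Rightarrow> nat multiset" where
  "cycle_type f Z = image_mset card (mset_set (cycles_of f Z))"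

definition num_cycles :: "('c \<Rightarrow> 'c) \<Rightarrow> 'c set \<Rightarrow> nat" where
  "num_cycles f Z = card (cycles_of f Z)"

definition genus :: "('a, 'b) monoid_scheme \<Rightarrow> nat \<Rightarrow> 'a list set set \<Rightarrow> real" where
  "genus G m Z = 1 - real (card Z) + ((real m - 1) * real (card Z)
      - (\<Sum>j = 2..m. real (num_cycles (rho_beta G Z 1 j) Z))) / 2"

section \<open>The group ((C3 x C3) : Q8) : C3 = ASL(2,3)\<close>

definition F3sq :: "(int \<times> int) set" where
  "F3sq = {0..2} \<times> {0..2}"

definition ASL23 :: "((int \<times> int) \<Rightarrow> (int \<times> int)) monoid" where
  "ASL23 = (BijGroup F3sq)\<lparr>carrier :=
     {restrict (\<lambda>(x, y). ((a * x + b * y + e) mod 3, (c * x + d * y + f) mod 3)) F3sq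
       | a b c d e f :: int. (a * d - b * c) mod 3 = 1}\<rparr>"

end

theory Submission
  imports Defs
begin

fun ncons :: "bool \<Rightarrow> bool list \<Rightarrow> bool list" where
  "ncons True (True # w) = w"
| "ncons False (False # False # w) = w"
| "ncons x w = x # w"

definition nf :: "bool list \<Rightarrow> bool list" where "nf w = foldr ncons w []"

definition winv :: "bool list \<Rightarrow> bool list" where
  "winv w = concat (map (\<lambda>x. if x then [True] else [False, False]) (rev w))"

lemma nf_Nil[simp]: "nf [] = []" by (simp add: nf_def)
lemma nf_Cons[simp]: "nf (x # w) = ncons x (nf w)" by (simp add: nf_def)
lemma winv_Nil[simp]: "winv [] = []" by (simp add: winv_def)
lemma winv_Cons[simp]: "winv (x # w) = winv w @ (if x then [True] else [False, False])"
  by (simp add: winv_def)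

locale setting = group G for G (structure) +
  fixes a b
  assumes a_c: "a \<in> carrier G" and b_c: "b \<in> carrier G"
    and aa: "a \<otimes> a = \<one>" and bbb: "b \<otimes> b \<otimes> b = \<one>"
begin

definition ev :: "bool list \<Rightarrow> 'a" where
  "ev w = foldr (\<lambda>x acc. (if x then a else b) \<otimes> acc) w \<one>"

lemma ev_Nil[simp]: "ev [] = \<one>" by (simp add: ev_def)
lemma ev_Cons: "ev (x # w) = (if x then a else b) \<otimes> ev w" by (simp add: ev_def)

lemma ev_c[simp]: "ev w \<in> carrier G"
  by (induction w) (auto simp: ev_Cons a_c b_c)

lemma ev_append: "ev (u @ v) = ev u \<otimes> ev v"
  by (induction u) (auto simp: ev_Cons a_c b_c m_assoc)

lemma ev_ncons: "ev (ncons x w) = ev (x # w)"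
proof (induction x w rule: ncons.induct)
  case (1 w)
  then show ?case using aa by (simp add: ev_Cons m_assoc[symmetric] a_c)
next
  case (2 w)
  then show ?case using bbb by (simp add: ev_Cons m_assoc[symmetric] b_c)
qed auto

lemma ev_nf[simp]: "ev (nf w) = ev w"
  by (induction w) (auto simp: ev_ncons ev_Cons)

lemma inv_a: "inv a = a" using aa a_c by (simp add: inv_equality)
lemma inv_b: "inv b = b \<otimes> b" using bbb b_c by (metis inv_equality m_assoc m_closed)

lemma ev_winv: "ev (winv w) = inv (ev w)"
proof (induction w)
  case Nil then show ?case by simp
next
  case (Cons x w)
  have "ev (winv (x # w)) = inv (ev w) \<otimes> inv (if x then a else b)"
    using Cons by (auto simp: ev_append ev_Cons inv_a inv_b a_c b_c m_assoc)
  also have "\<dots> = inv ((if x then a else b) \<otimes> ev w)"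
    using a_c b_c by (simp add: inv_mult_group)
  finally show ?case by (simp add: ev_Cons)
qed

lemma ev_eqI: "nf u = nf v \<Longrightarrow> ev u = ev v"
  by (metis ev_nf)

end

definition hsym :: "nat \<times> bool \<Rightarrow> bool list list \<Rightarrow> bool list list" where
 "hsym l ws = (let i = fst l; u = ws ! (i - 2); v = ws ! (i - 1) in
     if 2 \<le> i \<and> i \<le> length ws then
       (if snd l then ws[i - 2 := nf (u @ v @ winv u), i - 1 := u]
        else ws[i - 2 := v, i - 1 := nf (winv v @ u @ v)])
     else ws)"

definition cj :: "('a, 'b) monoid_scheme \<Rightarrow> 'a \<Rightarrow> 'a \<Rightarrow> 'a" where
  "cj G g x = g \<otimes>\<^bsub>G\<^esub> x \<otimes>\<^bsub>G\<^esub> inv\<^bsub>G\<^esub> g"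

context setting begin

lemma hur_letter_ev: "hur_letter G l (map ev ws) = map ev (hsym l ws)"
proof -
  obtain i e where l: "l = (i, e)" by (cases l)
  show ?thesis
  proof (cases "2 \<le> i \<and> i \<le> length ws")
    case True
    then have i1: "i - 2 < length ws" "i - 1 < length ws" by auto
    have h: "map ev ws ! (i - 2) = ev (ws ! (i - 2))" "map ev ws ! (i - 1) = ev (ws ! (i - 1))"
      using i1 by auto
    show ?thesis
    proof (cases e)
      case True
      then show ?thesis using \<open>2 \<le> i \<and> i \<le> length ws\<close>
        unfolding hur_letter_def hsym_def Let_def l fst_conv snd_conv
        by (simp only: if_True length_map h map_update ev_append ev_winv m_assoc ev_c ev_nf) (simp add: map_update ev_append ev_winv m_assoc)
    next
      case False
      then show ?thesis using \<open>2 \<le> i \<and> i \<le> length ws\<close>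
        unfolding hur_letter_def hsym_def Let_def l fst_conv snd_conv
        by (simp only: if_True if_False length_map h map_update ev_append ev_winv m_assoc ev_c ev_nf) (simp add: map_update ev_append ev_winv m_assoc)
    qed
  next
    case False
    then have "(2 \<le> i \<and> i \<le> length (map ev ws)) = False" by simp
    then show ?thesis using False unfolding hur_letter_def hsym_def Let_def l fst_conv snd_conv
      by (simp only: if_False)
  qed
qed

lemma hur_word_ev: "hur_word G w (map ev ws) = map ev (fold hsym w ws)"
  by (induction w arbitrary: ws) (auto simp: hur_word_def hur_letter_ev)

end

context group begin

lemma inv_cancel_l: "g \<in> carrier G \<Longrightarrow> z \<in> carrier G \<Longrightarrow> inv g \<otimes> (g \<otimes> z) = z"
  by (simp add: m_assoc[symmetric])

lemma inv_cancel_r: "g \<in> carrier G \<Longrightarrow> z \<in> carrier G \<Longrightarrow> g \<otimes> (inv g \<otimes> z) = z"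
  by (simp add: m_assoc[symmetric])

lemma cj_c[simp]: "g \<in> carrier G \<Longrightarrow> x \<in> carrier G \<Longrightarrow> cj G g x \<in> carrier G"
  by (simp add: cj_def)

lemma cj_inv: "g \<in> carrier G \<Longrightarrow> x \<in> carrier G \<Longrightarrow> inv (cj G g x) = cj G g (inv x)"
  by (simp add: cj_def inv_mult_group m_assoc)

lemma cj_mult: "g \<in> carrier G \<Longrightarrow> x \<in> carrier G \<Longrightarrow> y \<in> carrier G \<Longrightarrow>
   cj G g x \<otimes> cj G g y = cj G g (x \<otimes> y)"
  by (simp add: cj_def m_assoc inv_cancel_l)

lemma cj_cj: "g \<in> carrier G \<Longrightarrow> h \<in> carrier G \<Longrightarrow> x \<in> carrier G \<Longrightarrow>
   cj G h (cj G g x) = cj G (h \<otimes> g) x"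
  by (simp add: cj_def m_assoc inv_mult_group)

lemma cj_one: "x \<in> carrier G \<Longrightarrow> cj G \<one> x = x"
  by (simp add: cj_def)

lemma cj_inj: "g \<in> carrier G \<Longrightarrow> x \<in> carrier G \<Longrightarrow> y \<in> carrier G \<Longrightarrow>
   cj G g x = cj G g y \<Longrightarrow> x = y"
  by (metis cj_cj cj_one inv_closed l_inv)

lemma hur_letter_c: 
  assumes "set s \<subseteq> carrier G" shows "set (hur_letter G l s) \<subseteq> carrier G"
proof -
  obtain i e where l: "l = (i, e)" by (cases l)
  show ?thesis
  proof (cases "2 \<le> i \<and> i \<le> length s")
    case True
    then have c: "s!(i-2) \<in> carrier G" "s!(i-1) \<in> carrier G" using assms by auto
    show ?thesis
    proof (cases e)
      case True
      then show ?thesis using \<open>2 \<le> i \<and> i \<le> length s\<close>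
        unfolding hur_letter_def Let_def l fst_conv snd_conv
        by (simp only: if_True simp_thms) (intro set_update_subsetI assms m_closed inv_closed c)
    next
      case False
      then show ?thesis using \<open>2 \<le> i \<and> i \<le> length s\<close>
        unfolding hur_letter_def Let_def l fst_conv snd_conv
        by (simp only: if_True if_False simp_thms) (intro set_update_subsetI assms m_closed inv_closed c)
    qed
  next
    case False
    then have "(2 \<le> i \<and> i \<le> length s) = False" by simp
    then show ?thesis using assms unfolding hur_letter_def Let_def l fst_conv snd_conv
      by (simp only: if_False)
  qed
qed

lemma hur_letter_cj: 
  assumes "set s \<subseteq> carrier G" "g \<in> carrier G"
  shows "hur_letter G l (map (cj G g) s) = map (cj G g) (hur_letter G l s)"
proof -
  obtain i e where l: "l = (i, e)" by (cases l)
  show ?thesis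
  proof (cases "2 \<le> i \<and> i \<le> length s")
    case True
    then have c: "s!(i-2) \<in> carrier G" "s!(i-1) \<in> carrier G" "s!(i - Suc 0) \<in> carrier G" using assms by auto
    have h: "map (cj G g) s ! (i - 2) = cj G g (s ! (i - 2))" "map (cj G g) s ! (i - 1) = cj G g (s ! (i - 1))"
      using True by auto
    show ?thesis
    proof (cases e)
      case True
      then show ?thesis using \<open>2 \<le> i \<and> i \<le> length s\<close>
        unfolding hur_letter_def Let_def l fst_conv snd_conv
        by (simp only: if_True length_map h) (simp add: map_update c assms cj_inv cj_mult)
    next
      case False
      then show ?thesis using \<open>2 \<le> i \<and> i \<le> length s\<close>
        unfolding hur_letter_def Let_def l fst_conv snd_conv
        by (simp only: if_True if_False length_map h) (simp add: map_update c assms cj_inv cj_mult)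
    qed
  next
    case False
    then have "(2 \<le> i \<and> i \<le> length (map (cj G g) s)) = False" "(2 \<le> i \<and> i \<le> length s) = False" by simp_all
    then show ?thesis unfolding hur_letter_def Let_def l fst_conv snd_conv
      by (simp only: if_False)
  qed
qed

lemma hur_word_c: "set s \<subseteq> carrier G \<Longrightarrow> set (hur_word G w s) \<subseteq> carrier G"
  by (induction w arbitrary: s) (auto simp: hur_word_def dest: hur_letter_c)

lemma hur_word_cj: 
  assumes "set s \<subseteq> carrier G" "g \<in> carrier G"
  shows "hur_word G w (map (cj G g) s) = map (cj G g) (hur_word G w s)"
  using assms
proof (induction w arbitrary: s)
  case Nil then show ?case by (simp add: hur_word_def)
next
  case (Cons l w)
  have "hur_word G (l # w) (map (cj G g) s) = hur_word G w (hur_letter G l (map (cj G g) s))"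
    by (simp add: hur_word_def)
  also have "\<dots> = hur_word G w (map (cj G g) (hur_letter G l s))"
    using Cons by (simp add: hur_letter_cj)
  also have "\<dots> = map (cj G g) (hur_word G w (hur_letter G l s))"
    using Cons hur_letter_c by blast
  finally show ?case by (simp add: hur_word_def)
qed

lemma tuple_class_alt: "tuple_class G s = {map (cj G g) s | g. g \<in> carrier G}"
  by (simp add: tuple_class_def cj_def[abs_def])

lemma hur_word_cls_tc:
  assumes "set s \<subseteq> carrier G"
  shows "hur_word_cls G w (tuple_class G s) = tuple_class G (hur_word G w s)"
proof -
  have "hur_word G w ` {map (cj G g) s | g. g \<in> carrier G} = {map (cj G g) (hur_word G w s) | g. g \<in> carrier G}"
  proof (intro equalityI subsetI)
    fix x assume "x \<in> hur_word G w ` {map (cj G g) s | g. g \<in> carrier G}"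
    then obtain g where "g \<in> carrier G" "x = hur_word G w (map (cj G g) s)" by blast
    then show "x \<in> {map (cj G g) (hur_word G w s) | g. g \<in> carrier G}"
      using hur_word_cj[OF assms] by blast
  next
    fix x assume "x \<in> {map (cj G g) (hur_word G w s) | g. g \<in> carrier G}"
    then obtain g where "g \<in> carrier G" "x = map (cj G g) (hur_word G w s)" by blast
    then show "x \<in> hur_word G w ` {map (cj G g) s | g. g \<in> carrier G}"
      using hur_word_cj[OF assms] by (metis (mono_tags, lifting) image_eqI mem_Collect_eq)
  qed
  then show ?thesis unfolding hur_word_cls_def tuple_class_alt .
qed

lemma tuple_class_cj:
  assumes "set s \<subseteq> carrier G" "g \<in> carrier G"
  shows "tuple_class G (map (cj G g) s) = tuple_class G s"
proof -
  have 1: "map (cj G h) (map (cj G g) s) = map (cj G (h \<otimes> g)) s" if "h \<in> carrier G" for h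
    using assms that by (auto simp: cj_cj)
  have 2: "map (cj G h) s = map (cj G (h \<otimes> inv g)) (map (cj G g) s)" if "h \<in> carrier G" for h
    using assms that by (auto simp: cj_cj m_assoc)
  show ?thesis unfolding tuple_class_alt
  proof (intro equalityI subsetI)
    fix x assume "x \<in> {map (cj G h) (map (cj G g) s) | h. h \<in> carrier G}"
    then obtain h where "h \<in> carrier G" "x = map (cj G h) (map (cj G g) s)" by blast
    then show "x \<in> {map (cj G h) s | h. h \<in> carrier G}" using 1 assms(2) by blast
  next
    fix x assume "x \<in> {map (cj G h) s | h. h \<in> carrier G}"
    then obtain h where "h \<in> carrier G" "x = map (cj G h) s" by blast
    then show "x \<in> {map (cj G h) (map (cj G g) s) | h. h \<in> carrier G}" using 2 assms(2) by blast
  qed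
qed

lemma tuple_class_eq_imp:
  assumes "set s \<subseteq> carrier G" "set t \<subseteq> carrier G" "tuple_class G s = tuple_class G t"
  shows "\<exists>g \<in> carrier G. t = map (cj G g) s"
proof -
  have "map (cj G \<one>) t = t" using assms(2) by (induction t) (auto simp: cj_one)
  then have "t \<in> tuple_class G t" unfolding tuple_class_alt by force
  then show ?thesis using assms(3) unfolding tuple_class_alt by auto
qed

end

definition reps :: "bool list list list" where
  "reps = [[[False,False,True],[True,False,False],[False,False,True],[False,False,True],[True,False,True]],
    [[True,False,False],[False,True,False],[False,False,True],[False,False,True],[True,False,True]],
    [[False,True,False],[False,False,True],[False,False,True],[False,False,True],[True,False,True]],
    [[True,False,True,False,True],[True,False,False],[True,False,False],[False,False,True],[True,False,True]],
    [[True,False,True,False,True],[True,False,False],[False,False,True],[True,False,True,False,True],[True,False,True]],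
    [[False,False,True],[True,False,True,False,True],[False,False,True],[True,False,True,False,True],[True,False,True]],
    [[True,False,False],[True,False,False],[False,True,False],[False,False,True],[True,False,True]],
    [[False,False,True],[False,False,True],[False,False,True],[True,False,True,False,True,False,True,False,False,True],[True,False,True]],
    [[True,False,False],[True,False,False],[False,False,True],[True,False,False],[True,False,True]]]"

definition tabdata :: "((nat \<times> nat \<times> bool) \<times> (nat \<times> bool list) list) list" where
  "tabdata = [
    ((1,2,False), [(1,[]),(2,[]),(0,[]),(5,[True,False,False,True]),(3,[True,False,True]),(4,[]),(6,[]),(7,[]),(8,[])]),
    ((1,2,True), [(2,[]),(0,[]),(1,[]),(4,[True,False,False,True]),(5,[]),(3,[True,False,True]),(6,[]),(7,[]),(8,[])]),
    ((1,3,False), [(3,[]),(1,[]),(8,[True,False,True]),(6,[]),(4,[]),(2,[True,False,True]),(0,[]),(7,[]),(5,[True,False,True])]),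
    ((1,3,True), [(6,[]),(1,[]),(5,[True,False,False,True]),(0,[]),(4,[]),(8,[True,False,False,True]),(3,[]),(7,[]),(2,[True,False,False,True])]),
    ((1,4,False), [(4,[]),(1,[]),(7,[]),(2,[True,False,False,True]),(8,[]),(5,[]),(6,[]),(3,[True,False,True]),(0,[])]),
    ((1,4,True), [(8,[]),(1,[]),(3,[True,False,True]),(7,[True,False,False,True]),(0,[]),(5,[]),(6,[]),(2,[]),(4,[])]),
    ((1,5,False), [(1,[True,False]),(0,[False,False,True]),(2,[True,False,True,False,True,False]),(7,[True,False,False,True,False,False,True]),(6,[True,False,False]),(8,[True,False]),(4,[False,True]),(3,[True,False,True,False,True]),(5,[False,False,True])]),
    ((1,5,True), [(1,[True,False]),(0,[False,False,True]),(2,[False,False,True,False,False,True,False,False,True]),(7,[True,False,False,True,False,False,True]),(6,[True,False,False]),(8,[True,False]),(4,[False,True]),(3,[True,False,True,False,True]),(5,[False,False,True])]),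
    ((2,3,False), [(8,[True,False,True]),(5,[True,False,False,True]),(2,[]),(3,[]),(0,[True,False,True]),(6,[True,False,True]),(1,[]),(7,[]),(4,[True,False,True])]),
    ((2,3,True), [(4,[True,False,False,True]),(6,[]),(2,[]),(3,[]),(8,[True,False,False,True]),(1,[True,False,True]),(5,[True,False,False,True]),(7,[]),(0,[True,False,False,True])]),
    ((2,4,False), [(7,[]),(3,[True,False,True]),(2,[]),(8,[True,False,False,True]),(4,[]),(0,[]),(6,[]),(5,[]),(1,[])]),
    ((2,4,True), [(5,[]),(8,[]),(2,[]),(1,[True,False,False,True]),(4,[]),(7,[]),(6,[]),(0,[]),(3,[True,False,True])]),
    ((2,5,False), [(0,[True,False,True,False,True,False]),(2,[True,False]),(1,[False,False,True]),(6,[True,False]),(8,[True,False]),(7,[False,False,True]),(3,[False,False,True]),(5,[True,False]),(4,[False,False,True])]),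
    ((2,5,True), [(0,[False,False,True,False,False,True,False,False,True]),(2,[True,False]),(1,[False,False,True]),(6,[True,False]),(8,[True,False]),(7,[False,False,True]),(3,[False,False,True]),(5,[True,False]),(4,[False,False,True])]),
    ((3,4,False), [(0,[]),(1,[]),(2,[]),(4,[]),(5,[True,False,True]),(3,[True,False,False,True]),(8,[]),(6,[True,False,True]),(7,[True,False,False,True])]),
    ((3,4,True), [(0,[]),(1,[]),(2,[]),(5,[True,False,True]),(3,[]),(4,[True,False,False,True]),(7,[True,False,False,True]),(8,[True,False,True]),(6,[])]),
    ((3,5,False), [(4,[False,True]),(3,[False,False,True]),(5,[False,True]),(1,[True,False]),(0,[True,False,False]),(2,[True,False,False]),(7,[True,False,False,True,False,False,True]),(6,[True,False,True,False,True]),(8,[False,True,False,True,False,True])]),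
    ((3,5,True), [(4,[False,True]),(3,[False,False,True]),(5,[False,True]),(1,[True,False]),(0,[True,False,False]),(2,[True,False,False]),(7,[True,False,False,True,False,False,True]),(6,[True,False,True,False,True]),(8,[True,False,False,True,False,False,True,False,False])]),
    ((4,5,False), [(5,[False,False,True]),(4,[False,False,True]),(3,[True]),(2,[True]),(1,[True,False]),(0,[True,False]),(8,[False,True]),(7,[True,False,True,False,True,False]),(6,[True,False,False])]),
    ((4,5,True), [(5,[False,False,True]),(4,[False,False,True]),(3,[True]),(2,[True]),(1,[True,False]),(0,[True,False]),(8,[False,True]),(7,[False,False,True,False,False,True,False,False,True]),(6,[True,False,False])])]"

definition cjw :: "bool list \<Rightarrow> bool list \<Rightarrow> bool list" where
  "cjw g x = nf (g @ x @ winv g)"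

definition wd :: "nat \<Rightarrow> nat \<Rightarrow> bool \<Rightarrow> (nat \<times> bool) list" where
  "wd i j e = (if e then inv_word (beta_word i j) else beta_word i j)"

definition pairs5 :: "(nat \<times> nat) list" where
  "pairs5 = [(1,2),(1,3),(1,4),(1,5),(2,3),(2,4),(2,5),(3,4),(3,5),(4,5)]"

definition pt :: "nat \<Rightarrow> nat \<Rightarrow> bool \<Rightarrow> nat \<Rightarrow> nat" where
  "pt i j e k = fst (the (map_of tabdata (i,j,e)) ! k)"
definition gt :: "nat \<Rightarrow> nat \<Rightarrow> bool \<Rightarrow> nat \<Rightarrow> bool list" where
  "gt i j e k = snd (the (map_of tabdata (i,j,e)) ! k)"

definition chk :: "nat \<Rightarrow> nat \<Rightarrow> bool \<Rightarrow> nat \<Rightarrow> bool" where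
  "chk i j e k = (pt i j e k < 9 \<and>
     map nf (fold hsym (wd i j e) (reps ! k)) = map (cjw (gt i j e k)) (reps ! (pt i j e k)))"

lemma chk_all: "list_all (\<lambda>(i,j). list_all (\<lambda>e. list_all (\<lambda>k. chk i j e k) [0..<9]) [False, True]) pairs5"
  by code_simp

definition prodw :: "bool list list \<Rightarrow> (nat \<times> bool) list \<Rightarrow> bool list" where
  "prodw xs sp = concat (map (\<lambda>(i,e). if e then winv (xs ! i) else xs ! i) sp)"

definition Kw :: "bool list" where "Kw = [True,False,True,False,False]"

definition cctab :: "(bool list \<times> bool list) list" where
  "cctab = [([True,False,True,False,True],[True,False,True]), ([True,False,True,False,True,False,True,False,False,True],[True,False,True,False,True]), ([True,False,False],[True]), ([False,True,False],[False,True]), ([False,False,True],[])]"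

definition spa :: "(nat \<times> bool) list list" where
  "spa = [[(0,False),(4,False)], [(2,False),(4,False)], [(1,False),(4,False)], [(3,False),(4,False)], [(2,False),(4,False)], [(0,False),(4,False)], [(3,False),(4,False)], [(0,False),(4,False)], [(2,False),(4,False)]]"

definition spb :: "(nat \<times> bool) list list" where
  "spb = [[(0,False),(1,False)], [(0,False),(1,False)], [(0,False),(1,False)], [(3,False),(1,False)], [(2,False),(1,False)], [(0,False),(4,False),(0,True)], [(0,False),(2,False)], [(0,False),(4,False),(0,True)], [(2,False),(0,False)]]"

definition ccw :: "bool list \<Rightarrow> bool list" where "ccw x = the (map_of cctab x)"

definition chk2 :: "nat \<Rightarrow> bool" where
  "chk2 k = (length (reps ! k) = 5
     \<and> list_all (\<lambda>j. cjw (ccw (reps ! k ! j)) [False,False,True] = nf (reps ! k ! j)) [0..<4]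
     \<and> reps ! k ! 4 = [True,False,True]
     \<and> nf (concat (reps ! k)) = []
     \<and> list_all (\<lambda>(i,e). i < 5) (spa ! k) \<and> list_all (\<lambda>(i,e). i < 5) (spb ! k)
     \<and> nf (prodw (reps ! k) (spa ! k)) = [True] \<and> nf (prodw (reps ! k) (spb ! k)) = [False])"

lemma chk2_all: "list_all chk2 [0..<9]"
  by code_simp

lemma in_pairs5: "1 \<le> i \<Longrightarrow> i < j \<Longrightarrow> j \<le> (5::nat) \<Longrightarrow> (i,j) \<in> set pairs5"
  unfolding pairs5_def
  by (cases j; cases i; simp; (rename_tac j', case_tac j'; simp; (rename_tac j'', case_tac j''; simp)?)?; linarith?)?

locale main = setting +
  assumes cen: "center G = {\<one>}" and nontriv: "carrier G \<noteq> {\<one>}"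
    and gen: "generate G {ev [False,False,True], ev [True,False,False]} = carrier G"
begin

lemma ev_surj: assumes "g \<in> carrier G" shows "\<exists>w. g = ev w"
proof -
  have "x \<in> generate G {ev [False,False,True], ev [True,False,False]} \<Longrightarrow> \<exists>w. x = ev w" for x
  proof (induction rule: generate.induct)
    case one then show ?case by (metis ev_Nil)
  next
    case (incl h) then show ?case by blast
  next
    case (inv h) then show ?case by (metis ev_winv insertE singletonD)
  next
    case (eng h1 h2) then show ?case by (metis ev_append)
  qed
  then show ?thesis using assms gen by blast
qed

lemma comm_False: assumes "a \<otimes> b = b \<otimes> a" shows False
proof -
  have c1: "c \<otimes> ev v = ev v \<otimes> c" if "c = a \<or> c = b" for c v
  proof (induction v)
    case Nil then show ?case using that a_c b_c by auto
  next
    case (Cons x v)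
    have cc: "c \<in> carrier G" using that a_c b_c by auto
    have "c \<otimes> ev (x # v) = (c \<otimes> (if x then a else b)) \<otimes> ev v"
      using cc a_c b_c by (simp add: ev_Cons m_assoc)
    also have "\<dots> = ((if x then a else b) \<otimes> c) \<otimes> ev v"
      using that assms by auto
    also have "\<dots> = (if x then a else b) \<otimes> (ev v \<otimes> c)"
      using cc a_c b_c Cons by (simp add: m_assoc)
    also have "\<dots> = ev (x # v) \<otimes> c"
      using cc a_c b_c by (simp add: ev_Cons m_assoc)
    finally show ?case .
  qed
  have c2: "ev u \<otimes> ev v = ev v \<otimes> ev u" for u v
  proof (induction u)
    case Nil then show ?case by simp
  next
    case (Cons x u)
    have xc: "(if x then a else b) \<in> carrier G" using a_c b_c by auto
    have "ev (x # u) \<otimes> ev v = (if x then a else b) \<otimes> (ev v \<otimes> ev u)"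
      using xc Cons by (simp add: ev_Cons m_assoc)
    also have "\<dots> = ((if x then a else b) \<otimes> ev v) \<otimes> ev u"
      using xc by (simp add: m_assoc)
    also have "\<dots> = (ev v \<otimes> (if x then a else b)) \<otimes> ev u"
      using c1[of "if x then a else b" v] by auto
    also have "\<dots> = ev v \<otimes> ev (x # u)"
      using xc by (simp add: ev_Cons m_assoc)
    finally show ?case .
  qed
  have "center G = carrier G"
    unfolding center_def using ev_surj c2 by blast
  then show False using cen nontriv by simp
qed

lemma K_ne: "ev Kw \<noteq> \<one>"
proof
  assume "ev Kw = \<one>"
  then have "ev [True,False] \<otimes> inv (ev [False,True]) = \<one>"
    by (simp add: Kw_def ev_append[symmetric] ev_winv[symmetric])
  then have "ev [True,False] = ev [False,True]"
    by (metis ev_c inv_closed inv_inv inv_equality)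
  then have "a \<otimes> b = b \<otimes> a" by (simp add: ev_Cons a_c b_c)
  then show False by (rule comm_False)
qed

lemma neq_by: assumes "nf (g @ u @ winv v @ winv g) = Kw" shows "ev u \<noteq> ev v"
proof
  assume e: "ev u = ev v"
  have "ev (g @ u @ winv v @ winv g) = ev g \<otimes> (ev u \<otimes> (inv (ev v) \<otimes> inv (ev g)))"
    by (simp add: ev_append ev_winv)
  also have "\<dots> = \<one>" using e by (simp add: m_assoc[symmetric])
  finally show False using K_ne assms by (metis ev_nf)
qed

lemma neq0: "ev [True,False,True,False,True] \<noteq> ev [True,False,False]"
  by (rule neq_by[of "[False,False,True]"]) (simp add: Kw_def)

lemma neq1: "ev [True,False,True,False,True] \<noteq> ev [False,False,True]"
  by (rule neq_by[of "[]"]) (simp add: Kw_def)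

lemma neq2: "ev [True,False,False] \<noteq> ev [False,True,False]"
  by (rule neq_by[of "[]"]) (simp add: Kw_def)

lemma neq3: "ev [True,False,False] \<noteq> ev [False,False,True]"
  by (rule neq_by[of "[True,False]"]) (simp add: Kw_def)

lemma neq4: "ev [False,True,False] \<noteq> ev [False,False,True]"
  by (rule neq_by[of "[False,False]"]) (simp add: Kw_def)

lemma neq5: "ev [False,False,True] \<noteq> ev [True,False,True,False,True]"
  by (rule neq_by[of "[True]"]) (simp add: Kw_def)

lemma neq6: "ev [False,False,True] \<noteq> ev [True,False,True,False,True,False,True,False,False,True]"
  by (rule neq_by[of "[True,False,False,True]"]) (simp add: Kw_def)

lemma neq7: "ev [False,False,True] \<noteq> ev [True,False,False]"
  by (rule neq_by[of "[False]"]) (simp add: Kw_def)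

definition Tk :: "nat \<Rightarrow> 'a list set" where
  "Tk k = tuple_class G (map ev (reps ! k))"

lemma map_ev_c: "set (map ev xs) \<subseteq> carrier G" by auto

lemma ev_cjw: "ev (cjw g x) = cj G (ev g) (ev x)"
  by (simp add: cjw_def cj_def ev_append ev_winv m_assoc)

lemma Tk_step:
  assumes "1 \<le> i" "i < j" "j \<le> 5" "k < 9"
  shows "hur_word_cls G (wd i j e) (Tk k) = Tk (pt i j e k) \<and> pt i j e k < 9"
proof -
  have "(i,j) \<in> set pairs5" using assms in_pairs5 by blast
  from bspec[OF chk_all[unfolded list_all_iff] this]
  have "(\<forall>x\<in>{0..<9}. chk i j False x) \<and> (\<forall>x\<in>{0..<9}. chk i j True x)" by (simp add: list_all_iff)
  then have c: "chk i j e k" using assms(4) by (cases e) auto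
  let ?R = "reps ! k" and ?R' = "reps ! (pt i j e k)" and ?g = "gt i j e k"
  have "map ev (fold hsym (wd i j e) ?R) = map ev (map nf (fold hsym (wd i j e) ?R))"
    by simp
  also have "\<dots> = map ev (map (cjw ?g) ?R')" using c by (simp only: chk_def)
  also have "\<dots> = map (cj G (ev ?g)) (map ev ?R')" by (simp add: ev_cjw)
  finally have e1: "map ev (fold hsym (wd i j e) ?R) = map (cj G (ev ?g)) (map ev ?R')" .
  have "hur_word_cls G (wd i j e) (Tk k) = tuple_class G (hur_word G (wd i j e) (map ev ?R))"
    unfolding Tk_def by (rule hur_word_cls_tc[OF map_ev_c])
  also have "\<dots> = tuple_class G (map (cj G (ev ?g)) (map ev ?R'))"
    by (simp add: hur_word_ev e1)
  also have "\<dots> = Tk (pt i j e k)" unfolding Tk_def by (rule tuple_class_cj[OF map_ev_c ev_c])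
  finally show ?thesis using c by (simp add: chk_def)
qed

lemma Tk_pattern:
  assumes "Tk k = Tk k'" "i < length (reps ! k)" "j < length (reps ! k)"
    "length (reps ! k') = length (reps ! k)"
  shows "(ev (reps ! k ! i) = ev (reps ! k ! j)) = (ev (reps ! k' ! i) = ev (reps ! k' ! j))"
proof -
  obtain g where g: "g \<in> carrier G" "map ev (reps ! k') = map (cj G g) (map ev (reps ! k))"
    using tuple_class_eq_imp[OF map_ev_c map_ev_c assms(1)[unfolded Tk_def]] by blast
  have "ev (reps ! k' ! i) = cj G g (ev (reps ! k ! i))" "ev (reps ! k' ! j) = cj G g (ev (reps ! k ! j))"
    using g(2) assms(2-4) by (metis length_map nth_map)+
  then show ?thesis using cj_inj g(1) ev_c by metis
qed

end

lemma less9: "x < (9::nat) \<Longrightarrow> x = 0 \<or> x = 1 \<or> x = 2 \<or> x = 3 \<or> x = 4 \<or> x = 5 \<or> x = 6 \<or> x = 7 \<or> x = 8"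
  by arith
lemma all_less_9: "(\<forall>x::nat<9. P x) \<longleftrightarrow> P 0 \<and> P 1 \<and> P 2 \<and> P 3 \<and> P 4 \<and> P 5 \<and> P 6 \<and> P 7 \<and> P 8"
proof
  assume "\<forall>x<9. P x" then show "P 0 \<and> P 1 \<and> P 2 \<and> P 3 \<and> P 4 \<and> P 5 \<and> P 6 \<and> P 7 \<and> P 8" by simp
next
  assume "P 0 \<and> P 1 \<and> P 2 \<and> P 3 \<and> P 4 \<and> P 5 \<and> P 6 \<and> P 7 \<and> P 8"
  then show "\<forall>x<9. P x" using less9 by blast
qed
lemma less5: "x < (5::nat) \<Longrightarrow> x = 0 \<or> x = 1 \<or> x = 2 \<or> x = 3 \<or> x = 4"
  by arith

context main begin

lemma orbit_sub: "Y \<in> pure_orbit G 5 (Tk 0) \<Longrightarrow> Y \<in> Tk ` {0..<9}"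
proof (induction rule: pure_orbit.induct)
  case base then show ?case by auto
next
  case (step Y i j)
  then obtain k where k: "k < 9" "Y = Tk k" by auto
  have "hur_word_cls G (beta_word i j) Y = Tk (pt i j False k)" "pt i j False k < 9"
    using Tk_step[OF step(2-4) k(1), of False] k by (auto simp: wd_def)
  then show ?case by auto
next
  case (step_inv Y i j)
  then obtain k where k: "k < 9" "Y = Tk k" by auto
  have "hur_word_cls G (inv_word (beta_word i j)) Y = Tk (pt i j True k)" "pt i j True k < 9"
    using Tk_step[OF step_inv(2-4) k(1), of True] k by (auto simp: wd_def)
  then show ?case by auto
qed

lemma orbit_step: "Tk p \<in> pure_orbit G 5 (Tk 0) \<Longrightarrow> 1 \<le> i \<Longrightarrow> i < j \<Longrightarrow> j \<le> 5 \<Longrightarrow> p < 9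
   \<Longrightarrow> Tk (pt i j False p) \<in> pure_orbit G 5 (Tk 0)"
  using Tk_step[of i j p False] pure_orbit.step[of "Tk p" G 5 "Tk 0" i j] by (simp add: wd_def)

lemma orbit_eq: "pure_orbit G 5 (Tk 0) = Tk ` {0..<9}"
proof
  show "pure_orbit G 5 (Tk 0) \<subseteq> Tk ` {0..<9}" using orbit_sub by blast
next
  let ?O = "pure_orbit G 5 (Tk 0)"
  have r0: "Tk 0 \<in> ?O" by (rule pure_orbit.base)
  have r1: "Tk 1 \<in> ?O" using orbit_step[OF r0, of 1 2] by (simp add: pt_def tabdata_def)
  have r3: "Tk 3 \<in> ?O" using orbit_step[OF r0, of 1 3] by (simp add: pt_def tabdata_def)
  have r4: "Tk 4 \<in> ?O" using orbit_step[OF r0, of 1 4] by (simp add: pt_def tabdata_def)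
  have r8: "Tk 8 \<in> ?O" using orbit_step[OF r0, of 2 3] by (simp add: pt_def tabdata_def)
  have r7: "Tk 7 \<in> ?O" using orbit_step[OF r0, of 2 4] by (simp add: pt_def tabdata_def)
  have r5: "Tk 5 \<in> ?O" using orbit_step[OF r0, of 4 5] by (simp add: pt_def tabdata_def)
  have r2: "Tk 2 \<in> ?O" using orbit_step[OF r1, of 1 2] by (simp add: pt_def tabdata_def)
  have r6: "Tk 6 \<in> ?O" using orbit_step[OF r3, of 1 3] by (simp add: pt_def tabdata_def)
  show "Tk ` {0..<9} \<subseteq> ?O"
  proof
    fix Y assume "Y \<in> Tk ` {0..<9}"
    then obtain k where "k < 9" "Y = Tk k" by auto
    then show "Y \<in> ?O" using less9[of k] r0 r1 r2 r3 r4 r5 r6 r7 r8 by auto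
  qed
qed

lemma Tk_inj: "inj_on Tk {0..<9}"
proof -
  have d1: "Tk 0 \<noteq> Tk 1"
  proof
    assume "Tk 0 = Tk 1"
    from Tk_pattern[OF this, of 0 2] show False using neq3 by (simp add: reps_def)
  qed
  have d2: "Tk 0 \<noteq> Tk 2"
  proof
    assume "Tk 0 = Tk 2"
    from Tk_pattern[OF this, of 0 2] show False using neq4 by (simp add: reps_def)
  qed
  have d3: "Tk 0 \<noteq> Tk 3"
  proof
    assume "Tk 0 = Tk 3"
    from Tk_pattern[OF this, of 0 2] show False using neq0 by (simp add: reps_def)
  qed
  have d4: "Tk 0 \<noteq> Tk 4"
  proof
    assume "Tk 0 = Tk 4"
    from Tk_pattern[OF this, of 0 2] show False using neq1 by (simp add: reps_def)
  qed
  have d5: "Tk 0 \<noteq> Tk 5"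
  proof
    assume "Tk 0 = Tk 5"
    from Tk_pattern[OF this, of 0 3] show False using neq5 by (simp add: reps_def)
  qed
  have d6: "Tk 0 \<noteq> Tk 6"
  proof
    assume "Tk 0 = Tk 6"
    from Tk_pattern[OF this, of 0 2] show False using neq2 by (simp add: reps_def)
  qed
  have d7: "Tk 0 \<noteq> Tk 7"
  proof
    assume "Tk 0 = Tk 7"
    from Tk_pattern[OF this, of 0 3] show False using neq6 by (simp add: reps_def)
  qed
  have d8: "Tk 0 \<noteq> Tk 8"
  proof
    assume "Tk 0 = Tk 8"
    from Tk_pattern[OF this, of 0 2] show False using neq3 by (simp add: reps_def)
  qed
  have d9: "Tk 1 \<noteq> Tk 2"
  proof
    assume "Tk 1 = Tk 2"
    from Tk_pattern[OF this, of 1 2] show False using neq4 by (simp add: reps_def)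
  qed
  have d10: "Tk 1 \<noteq> Tk 3"
  proof
    assume "Tk 1 = Tk 3"
    from Tk_pattern[OF this, of 2 3] show False using neq3 by (simp add: reps_def)
  qed
  have d11: "Tk 1 \<noteq> Tk 4"
  proof
    assume "Tk 1 = Tk 4"
    from Tk_pattern[OF this, of 2 3] show False using neq5 by (simp add: reps_def)
  qed
  have d12: "Tk 1 \<noteq> Tk 5"
  proof
    assume "Tk 1 = Tk 5"
    from Tk_pattern[OF this, of 2 3] show False using neq5 by (simp add: reps_def)
  qed
  have d13: "Tk 1 \<noteq> Tk 6"
  proof
    assume "Tk 1 = Tk 6"
    from Tk_pattern[OF this, of 2 3] show False using neq4 by (simp add: reps_def)
  qed
  have d14: "Tk 1 \<noteq> Tk 7"
  proof
    assume "Tk 1 = Tk 7"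
    from Tk_pattern[OF this, of 2 3] show False using neq6 by (simp add: reps_def)
  qed
  have d15: "Tk 1 \<noteq> Tk 8"
  proof
    assume "Tk 1 = Tk 8"
    from Tk_pattern[OF this, of 2 3] show False using neq7 by (simp add: reps_def)
  qed
  have d16: "Tk 2 \<noteq> Tk 3"
  proof
    assume "Tk 2 = Tk 3"
    from Tk_pattern[OF this, of 1 3] show False using neq3 by (simp add: reps_def)
  qed
  have d17: "Tk 2 \<noteq> Tk 4"
  proof
    assume "Tk 2 = Tk 4"
    from Tk_pattern[OF this, of 1 2] show False using neq3 by (simp add: reps_def)
  qed
  have d18: "Tk 2 \<noteq> Tk 5"
  proof
    assume "Tk 2 = Tk 5"
    from Tk_pattern[OF this, of 1 2] show False using neq1 by (simp add: reps_def)
  qed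
  have d19: "Tk 2 \<noteq> Tk 6"
  proof
    assume "Tk 2 = Tk 6"
    from Tk_pattern[OF this, of 1 2] show False using neq2 by (simp add: reps_def)
  qed
  have d20: "Tk 2 \<noteq> Tk 7"
  proof
    assume "Tk 2 = Tk 7"
    from Tk_pattern[OF this, of 1 3] show False using neq6 by (simp add: reps_def)
  qed
  have d21: "Tk 2 \<noteq> Tk 8"
  proof
    assume "Tk 2 = Tk 8"
    from Tk_pattern[OF this, of 1 2] show False using neq3 by (simp add: reps_def)
  qed
  have d22: "Tk 3 \<noteq> Tk 4"
  proof
    assume "Tk 3 = Tk 4"
    from Tk_pattern[OF this, of 1 2] show False using neq3 by (simp add: reps_def)
  qed
  have d23: "Tk 3 \<noteq> Tk 5"
  proof
    assume "Tk 3 = Tk 5"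
    from Tk_pattern[OF this, of 1 2] show False using neq1 by (simp add: reps_def)
  qed
  have d24: "Tk 3 \<noteq> Tk 6"
  proof
    assume "Tk 3 = Tk 6"
    from Tk_pattern[OF this, of 1 2] show False using neq2 by (simp add: reps_def)
  qed
  have d25: "Tk 3 \<noteq> Tk 7"
  proof
    assume "Tk 3 = Tk 7"
    from Tk_pattern[OF this, of 0 1] show False using neq0 by (simp add: reps_def)
  qed
  have d26: "Tk 3 \<noteq> Tk 8"
  proof
    assume "Tk 3 = Tk 8"
    from Tk_pattern[OF this, of 1 2] show False using neq3 by (simp add: reps_def)
  qed
  have d27: "Tk 4 \<noteq> Tk 5"
  proof
    assume "Tk 4 = Tk 5"
    from Tk_pattern[OF this, of 0 3] show False using neq5 by (simp add: reps_def)
  qed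
  have d28: "Tk 4 \<noteq> Tk 6"
  proof
    assume "Tk 4 = Tk 6"
    from Tk_pattern[OF this, of 0 3] show False using neq3 by (simp add: reps_def)
  qed
  have d29: "Tk 4 \<noteq> Tk 7"
  proof
    assume "Tk 4 = Tk 7"
    from Tk_pattern[OF this, of 0 3] show False using neq6 by (simp add: reps_def)
  qed
  have d30: "Tk 4 \<noteq> Tk 8"
  proof
    assume "Tk 4 = Tk 8"
    from Tk_pattern[OF this, of 0 1] show False using neq0 by (simp add: reps_def)
  qed
  have d31: "Tk 5 \<noteq> Tk 6"
  proof
    assume "Tk 5 = Tk 6"
    from Tk_pattern[OF this, of 0 2] show False using neq2 by (simp add: reps_def)
  qed
  have d32: "Tk 5 \<noteq> Tk 7"
  proof
    assume "Tk 5 = Tk 7"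
    from Tk_pattern[OF this, of 1 3] show False using neq6 by (simp add: reps_def)
  qed
  have d33: "Tk 5 \<noteq> Tk 8"
  proof
    assume "Tk 5 = Tk 8"
    from Tk_pattern[OF this, of 0 2] show False using neq3 by (simp add: reps_def)
  qed
  have d34: "Tk 6 \<noteq> Tk 7"
  proof
    assume "Tk 6 = Tk 7"
    from Tk_pattern[OF this, of 0 2] show False using neq2 by (simp add: reps_def)
  qed
  have d35: "Tk 6 \<noteq> Tk 8"
  proof
    assume "Tk 6 = Tk 8"
    from Tk_pattern[OF this, of 0 3] show False using neq3 by (simp add: reps_def)
  qed
  have d36: "Tk 7 \<noteq> Tk 8"
  proof
    assume "Tk 7 = Tk 8"
    from Tk_pattern[OF this, of 0 2] show False using neq3 by (simp add: reps_def)
  qed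
  note ds = d1 d2 d3 d4 d5 d6 d7 d8 d9 d10 d11 d12 d13 d14 d15 d16 d17 d18 d19 d20 d21 d22 d23 d24 d25 d26 d27 d28 d29 d30 d31 d32 d33 d34 d35 d36
  have D: "\<forall>x<9. \<forall>y<9. x < y \<longrightarrow> Tk x \<noteq> Tk y" 
    unfolding all_less_9 using ds by simp
  show ?thesis
  proof (rule inj_onI)
    fix x y assume "x \<in> {0..<9}" "y \<in> {0..<9}" "Tk x = Tk y"
    then show "x = y" using D by (metis atLeastLessThan_iff linorder_neqE_nat)
  qed
qed

end

context main begin

lemma tuple_prod_ev: "tuple_prod G (map ev xs) = ev (concat xs)"
  by (induction xs) (simp_all add: tuple_prod_def ev_append)

lemma prodw_gen: "list_all (\<lambda>(i,e). i < length xs) sp \<Longrightarrow> ev (prodw xs sp) \<in> generate G (set (map ev xs))"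
proof (induction sp)
  case Nil then show ?case by (simp add: prodw_def generate.one)
next
  case (Cons p sp)
  obtain i e where p: "p = (i, e)" by (cases p)
  have i: "i < length xs" using Cons.prems p by simp
  have m: "ev (xs ! i) \<in> set (map ev xs)" using i by auto
  have IH: "ev (prodw xs sp) \<in> generate G (set (map ev xs))" using Cons by simp
  have "prodw xs (p # sp) = (if e then winv (xs ! i) else xs ! i) @ prodw xs sp"
    by (simp add: prodw_def p)
  then have "ev (prodw xs (p # sp)) = (if e then inv (ev (xs ! i)) else ev (xs ! i)) \<otimes> ev (prodw xs sp)"
    by (simp add: ev_append ev_winv)
  moreover have "(if e then inv (ev (xs ! i)) else ev (xs ! i)) \<in> generate G (set (map ev xs))"
    using m by (auto intro: generate.incl generate.inv)
  ultimately show ?case using IH by (simp add: generate.eng)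
qed

lemma all_ev_gen: "ev [True] \<in> H \<Longrightarrow> ev [False] \<in> H \<Longrightarrow> H = generate G S \<Longrightarrow> ev w \<in> H"
proof (induction w)
  case Nil then show ?case by (simp add: generate.one)
next
  case (Cons x w)
  have "ev (x # w) = ev [x] \<otimes> ev w" using ev_append[of "[x]" w] by simp
  moreover have "ev [x] \<in> H" using Cons by (cases x) auto
  ultimately show ?case using Cons by (simp add: generate.eng)
qed

lemma Tk_Sigma:
  assumes "k < 9"
  shows "Tk k \<in> Sigma_i G [conj_class G (ev [False,False,True]), conj_class G (ev [False,False,True]),
      conj_class G (ev [False,False,True]), conj_class G (ev [False,False,True]), conj_class G (ev [True,False,True])]"
    (is "_ \<in> Sigma_i G ?Cs")
proof -
  have c: "chk2 k" using chk2_all assms by (simp add: list_all_iff)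
  let ?s = "map ev (reps ! k)"
  have len: "length ?s = 5" using c by (simp add: chk2_def)
  have cc: "\<forall>j\<in>set [0..<4]. cjw (ccw (reps ! k ! j)) [False,False,True] = nf (reps ! k ! j)"
    using c by (simp add: chk2_def list_all_iff)
  have e4: "reps ! k ! 4 = [True,False,True]" using c by (simp add: chk2_def)
  have inC: "ev x \<in> conj_class G (ev [False,False,True])" 
    if "cjw h [False,False,True] = nf x" for x h
  proof -
    have "ev x = ev (nf x)" by simp
    also have "\<dots> = ev (cjw h [False,False,True])" using that by simp
    also have "\<dots> = ev h \<otimes> ev [False,False,True] \<otimes> inv (ev h)" by (simp add: ev_cjw cj_def)
    finally show ?thesis unfolding conj_class_def using ev_c[of h] by blast
  qed
  have ent: "\<forall>j<5. ?s ! j \<in> ?Cs ! j"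
  proof (intro allI impI)
    fix j :: nat assume j: "j < 5"
    show "?s ! j \<in> ?Cs ! j"
    proof (cases "j < 4")
      case True
      then have "cjw (ccw (reps ! k ! j)) [False,False,True] = nf (reps ! k ! j)" using cc by auto
      then have "ev (reps ! k ! j) \<in> conj_class G (ev [False,False,True])" by (rule inC)
      moreover have "?Cs ! j = conj_class G (ev [False,False,True])" using True less5[of j] by auto
      ultimately show ?thesis using j len by simp
    next
      case False
      then have j4: "j = 4" using j by simp
      have "ev [True,False,True] = \<one> \<otimes> ev [True,False,True] \<otimes> inv \<one>" by simp
      then have "ev [True,False,True] \<in> conj_class G (ev [True,False,True])"
        unfolding conj_class_def using one_closed by blast
      then show ?thesis using j4 e4 len by simp
    qed
  qed
  have sub: "set ?s \<subseteq> carrier G" by auto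
  have ga: "ev [True] \<in> generate G (set ?s)"
  proof -
    have "ev (prodw (reps ! k) (spa ! k)) \<in> generate G (set ?s)"
      using c prodw_gen[of "reps ! k" "spa ! k"] len by (simp add: chk2_def)
    moreover have "nf (prodw (reps ! k) (spa ! k)) = [True]" using c by (simp add: chk2_def)
    ultimately show ?thesis by (metis ev_nf)
  qed
  have gb: "ev [False] \<in> generate G (set ?s)"
  proof -
    have "ev (prodw (reps ! k) (spb ! k)) \<in> generate G (set ?s)"
      using c prodw_gen[of "reps ! k" "spb ! k"] len by (simp add: chk2_def)
    moreover have "nf (prodw (reps ! k) (spb ! k)) = [False]" using c by (simp add: chk2_def)
    ultimately show ?thesis by (metis ev_nf)
  qed
  have gen': "generate G (set ?s) = carrier G"
  proof
    show "generate G (set ?s) \<subseteq> carrier G" using generate_incl[OF sub] .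
    show "carrier G \<subseteq> generate G (set ?s)"
      using ev_surj all_ev_gen[OF ga gb refl] by blast
  qed
  have prod: "tuple_prod G ?s = \<one>"
  proof -
    have "nf (concat (reps ! k)) = []" using c by (simp add: chk2_def)
    then have "ev (concat (reps ! k)) = \<one>" by (metis ev_nf ev_Nil)
    then show ?thesis by (simp add: tuple_prod_ev)
  qed
  show ?thesis unfolding Sigma_i_def Tk_def
    using len ent sub gen' prod
    by (intro CollectI exI[where x="map ev (reps ! k)"]) simp
qed

end

lemma orbit_fin:
  assumes "(p ^^ N) x = x" "N > 0"
  shows "{(p ^^ n) x | n. True} = (\<lambda>n. (p ^^ n) x) ` {0..<N}"
proof -
  have "(p ^^ n) x = (p ^^ (n mod N)) x" for n
  proof (induction n rule: less_induct)
    case (less n)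
    show ?case
    proof (cases "n < N")
      case True then show ?thesis by simp
    next
      case False
      then have n: "n = (n - N) + N" by simp
      have "(p ^^ n) x = (p ^^ (n - N)) ((p ^^ N) x)" by (subst n) (simp add: funpow_add)
      also have "\<dots> = (p ^^ (n - N)) x" using assms by simp
      also have "\<dots> = (p ^^ ((n - N) mod N)) x" using less assms False by simp
      also have "(n - N) mod N = n mod N" using False by (simp add: mod_if)
      finally show ?thesis .
    qed
  qed
  note md = this
  show ?thesis
  proof (intro equalityI subsetI)
    fix y assume "y \<in> {(p ^^ n) x | n. True}"
    then obtain n where "y = (p^^n) x" by blast
    then have "y = (p ^^ (n mod N)) x" using md by simp
    moreover have "n mod N \<in> {0..<N}" using assms(2) by simp
    ultimately show "y \<in> (\<lambda>n. (p ^^ n) x) ` {0..<N}" by blast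
  next
    fix y assume "y \<in> (\<lambda>n. (p ^^ n) x) ` {0..<N}" then show "y \<in> {(p ^^ n) x | n. True}" by blast
  qed
qed

lemma cycles_fin:
  assumes "\<forall>x\<in>A. (p ^^ N) x = x" "N > 0"
  shows "cycles_of p A = (\<lambda>x. (\<lambda>n. (p ^^ n) x) ` {0..<N}) ` A"
proof -
  have "cycles_of p A = (\<lambda>x. {(p ^^ n) x | n. True}) ` A" unfolding cycles_of_def by blast
  also have "\<dots> = (\<lambda>x. (\<lambda>n. (p ^^ n) x) ` {0..<N}) ` A"
    using orbit_fin[where p=p and N=N] assms by (intro image_cong) auto
  finally show ?thesis .
qed

lemma mset_set_list: "mset_set (set xs) = mset (remdups xs)"
  by (metis distinct_remdups mset_set_set set_remdups)

lemma cycle_type_comp: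
  assumes "\<forall>x\<in>set [0..<9]. (p ^^ 6) x = x"
  shows "cycle_type p {0..<9} = mset (map card (remdups (map (\<lambda>x. set (map (\<lambda>n. (p ^^ n) x) [0..<6])) [0..<9])))"
proof -
  have "cycles_of p {0..<9} = (\<lambda>x. (\<lambda>n. (p ^^ n) x) ` {0..<6}) ` {0..<9}"
    using cycles_fin[where A="{0..<9}" and p=p and N=6] assms by simp
  also have "\<dots> = set (map (\<lambda>x. set (map (\<lambda>n. (p ^^ n) x) [0..<6])) [0..<9])"
    by (simp add: image_image)
  finally have cyc: "cycles_of p {0..<9} = set (map (\<lambda>x. set (map (\<lambda>n. (p ^^ n) x) [0..<6])) [0..<9])" .
  show ?thesis unfolding cycle_type_def cyc mset_set_list by (simp only: mset_map)
qed

lemma transfer_iter: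
  assumes "\<forall>k\<in>A. f (T k) = T (p k)" "\<forall>k\<in>A. p k \<in> A" "k \<in> A"
  shows "(restrict f (T ` A) ^^ n) (T k) = T ((p ^^ n) k) \<and> (p ^^ n) k \<in> A"
  by (induction n) (use assms in auto)

lemma num_cycles_size: "num_cycles p A = size (cycle_type p A)"
  unfolding num_cycles_def cycle_type_def by simp

lemma transfer_cycles:
  assumes inj: "inj_on T A" and f: "\<forall>k\<in>A. f (T k) = T (p k)" and pA: "\<forall>k\<in>A. p k \<in> A"
    and fin: "finite A"
  shows "cycle_type (restrict f (T ` A)) (T ` A) = cycle_type p A"
    and "num_cycles (restrict f (T ` A)) (T ` A) = num_cycles p A"
proof -
  let ?F = "restrict f (T ` A)"
  let ?C = "cycles_of p A"
  have orb: "{(?F ^^ n) (T k) | n. True} = T ` {(p ^^ n) k | n. True}" if "k \<in> A" for k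
  proof -
    have h: "\<And>n. (?F ^^ n) (T k) = T ((p ^^ n) k)" using transfer_iter[OF f pA that] by blast
    show ?thesis unfolding h by blast
  qed
  have "cycles_of ?F (T ` A) = (\<lambda>k. {(?F ^^ n) (T k) | n. True}) ` A"
    unfolding cycles_of_def by blast
  also have "\<dots> = (\<lambda>k. T ` {(p ^^ n) k | n. True}) ` A"
    using orb by (intro image_cong) auto
  also have "\<dots> = (\<lambda>S. T ` S) ` ?C"
    unfolding cycles_of_def by blast
  finally have cyc: "cycles_of ?F (T ` A) = (\<lambda>S. T ` S) ` ?C" .
  have sub: "S \<subseteq> A" if "S \<in> ?C" for S
    using that transfer_iter[OF f pA] unfolding cycles_of_def by blast
  have injS: "inj_on (\<lambda>S. T ` S) ?C"
    using inj sub by (auto simp: inj_on_def inj_on_image_eq_iff)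
  have finC: "finite ?C" unfolding cycles_of_def using fin by simp
  have "image_mset card (mset_set ((\<lambda>S. T ` S) ` ?C)) = image_mset card (image_mset (\<lambda>S. T ` S) (mset_set ?C))"
    by (simp add: image_mset_mset_set[OF injS])
  also have "\<dots> = image_mset (\<lambda>S. card (T ` S)) (mset_set ?C)"
    by (simp add: multiset.map_comp comp_def)
  also have "\<dots> = image_mset card (mset_set ?C)"
  proof (rule image_mset_cong)
    fix S assume "S \<in># mset_set ?C"
    then have "S \<in> ?C" using finC by simp
    then show "card (T ` S) = card S" using sub inj by (meson card_image inj_on_subset)
  qed
  finally show ct: "cycle_type ?F (T ` A) = cycle_type p A" unfolding cycle_type_def cyc .
  show "num_cycles ?F (T ` A) = num_cycles p A" by (simp add: num_cycles_size ct)
qed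

lemma ct12: "cycle_type (pt 1 2 False) {0..<9} = {#1,1,1,3,3#}"
proof -
  have "\<forall>x\<in>set [0..<9]. (pt 1 2 False ^^ 6) x = x" by code_simp
  then show ?thesis by (subst cycle_type_comp) (assumption, code_simp)
qed

lemma ct13: "cycle_type (pt 1 3 False) {0..<9} = {#1,1,1,3,3#}"
proof -
  have "\<forall>x\<in>set [0..<9]. (pt 1 3 False ^^ 6) x = x" by code_simp
  then show ?thesis by (subst cycle_type_comp) (assumption, code_simp)
qed

lemma ct14: "cycle_type (pt 1 4 False) {0..<9} = {#1,1,1,3,3#}"
proof -
  have "\<forall>x\<in>set [0..<9]. (pt 1 4 False ^^ 6) x = x" by code_simp
  then show ?thesis by (subst cycle_type_comp) (assumption, code_simp)
qed

lemma ct15: "cycle_type (pt 1 5 False) {0..<9} = {#1,2,2,2,2#}"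
proof -
  have "\<forall>x\<in>set [0..<9]. (pt 1 5 False ^^ 6) x = x" by code_simp
  then show ?thesis by (subst cycle_type_comp) (assumption, code_simp)
qed

lemma ct23: "cycle_type (pt 2 3 False) {0..<9} = {#1,1,1,3,3#}"
proof -
  have "\<forall>x\<in>set [0..<9]. (pt 2 3 False ^^ 6) x = x" by code_simp
  then show ?thesis by (subst cycle_type_comp) (assumption, code_simp)
qed

lemma ct24: "cycle_type (pt 2 4 False) {0..<9} = {#1,1,1,3,3#}"
proof -
  have "\<forall>x\<in>set [0..<9]. (pt 2 4 False ^^ 6) x = x" by code_simp
  then show ?thesis by (subst cycle_type_comp) (assumption, code_simp)
qed

lemma ct25: "cycle_type (pt 2 5 False) {0..<9} = {#1,2,2,2,2#}"
proof -
  have "\<forall>x\<in>set [0..<9]. (pt 2 5 False ^^ 6) x = x" by code_simp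
  then show ?thesis by (subst cycle_type_comp) (assumption, code_simp)
qed

lemma ct34: "cycle_type (pt 3 4 False) {0..<9} = {#1,1,1,3,3#}"
proof -
  have "\<forall>x\<in>set [0..<9]. (pt 3 4 False ^^ 6) x = x" by code_simp
  then show ?thesis by (subst cycle_type_comp) (assumption, code_simp)
qed

lemma ct35: "cycle_type (pt 3 5 False) {0..<9} = {#1,2,2,2,2#}"
proof -
  have "\<forall>x\<in>set [0..<9]. (pt 3 5 False ^^ 6) x = x" by code_simp
  then show ?thesis by (subst cycle_type_comp) (assumption, code_simp)
qed

lemma ct45: "cycle_type (pt 4 5 False) {0..<9} = {#1,2,2,2,2#}"
proof -
  have "\<forall>x\<in>set [0..<9]. (pt 4 5 False ^^ 6) x = x" by code_simp
  then show ?thesis by (subst cycle_type_comp) (assumption, code_simp)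
qed

definition aff :: "int \<Rightarrow> int \<Rightarrow> int \<Rightarrow> int \<Rightarrow> int \<Rightarrow> int \<Rightarrow> (int \<times> int \<Rightarrow> int \<times> int)" where
  "aff a b c d e f = restrict (\<lambda>(x, y). ((a * x + b * y + e) mod 3, (c * x + d * y + f) mod 3)) F3sq"

lemma F3sq_iff: "(x, y) \<in> F3sq \<longleftrightarrow> 0 \<le> x \<and> x < 3 \<and> 0 \<le> y \<and> y < 3"
  by (auto simp: F3sq_def)

lemma aff_app: "(x, y) \<in> F3sq \<Longrightarrow> aff a b c d e f (x, y) = ((a * x + b * y + e) mod 3, (c * x + d * y + f) mod 3)"
  by (simp add: aff_def)

lemma aff_out: "z \<notin> F3sq \<Longrightarrow> aff a b c d e f z = undefined"
  by (simp add: aff_def)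

lemma aff_into: "z \<in> F3sq \<Longrightarrow> aff a b c d e f z \<in> F3sq"
  by (cases z) (simp add: aff_app F3sq_iff)

lemma carrier_ASL23: "carrier ASL23 = {aff a b c d e f | a b c d e f. (a * d - b * c) mod 3 = 1}"
  unfolding ASL23_def aff_def by simp

lemma aff_eqI:
  assumes "\<And>x y. (x, y) \<in> F3sq \<Longrightarrow> g (x, y) = h (x, y)" "g \<in> extensional F3sq" "h \<in> extensional F3sq"
  shows "g = h"
  using assms by (metis extensionalityI surj_pair)

lemma aff_ext: "aff a b c d e f \<in> extensional F3sq" by (simp add: aff_def)

lemma aff_cong:
  assumes "a mod 3 = a' mod 3" "b mod 3 = b' mod 3" "c mod 3 = c' mod 3" "d mod 3 = d' mod 3"
    "e mod 3 = e' mod 3" "f mod 3 = f' mod 3"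
  shows "aff a b c d e f = aff a' b' c' d' e' f'"
proof (rule aff_eqI[OF _ aff_ext aff_ext])
  fix x y :: int assume xy: "(x, y) \<in> F3sq"
  have 1: "(a * x + b * y + e) mod 3 = (a' * x + b' * y + e') mod 3"
    using assms by (intro mod_add_cong mod_mult_cong refl)
  have 2: "(c * x + d * y + f) mod 3 = (c' * x + d' * y + f') mod 3"
    using assms by (intro mod_add_cong mod_mult_cong refl)
  show "aff a b c d e f (x, y) = aff a' b' c' d' e' f' (x, y)"
    using xy 1 2 by (simp add: aff_app)
qed

lemma mod3_lin: "(a * (u mod 3) + b * (v mod 3) + e) mod 3 = (a * u + b * v + e) mod (3::int)"
  by (intro mod_add_cong mod_mult_right_eq refl)

lemma aff_comp:
  "compose F3sq (aff a b c d e f) (aff a2 b2 c2 d2 e2 f2) =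
   aff (a * a2 + b * c2) (a * b2 + b * d2) (c * a2 + d * c2) (c * b2 + d * d2) (a * e2 + b * f2 + e) (c * e2 + d * f2 + f)"
proof (rule aff_eqI)
  fix x y :: int assume xy: "(x, y) \<in> F3sq"
  let ?u = "a2 * x + b2 * y + e2" and ?v = "c2 * x + d2 * y + f2"
  have in2: "(?u mod 3, ?v mod 3) \<in> F3sq" by (simp add: F3sq_iff)
  have "compose F3sq (aff a b c d e f) (aff a2 b2 c2 d2 e2 f2) (x, y) = aff a b c d e f (?u mod 3, ?v mod 3)"
    using xy by (simp add: compose_def aff_app)
  also have "\<dots> = ((a * ?u + b * ?v + e) mod 3, (c * ?u + d * ?v + f) mod 3)"
    using in2 by (simp add: aff_app mod3_lin)
  also have "\<dots> = aff (a * a2 + b * c2) (a * b2 + b * d2) (c * a2 + d * c2) (c * b2 + d * d2) (a * e2 + b * f2 + e) (c * e2 + d * f2 + f) (x, y)"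
    using xy by (simp add: aff_app algebra_simps)
  finally show "compose F3sq (aff a b c d e f) (aff a2 b2 c2 d2 e2 f2) (x, y) = aff (a * a2 + b * c2) (a * b2 + b * d2) (c * a2 + d * c2) (c * b2 + d * d2) (a * e2 + b * f2 + e) (c * e2 + d * f2 + f) (x, y)" .
qed (auto simp: compose_def aff_ext)

lemma aff_id: "aff 1 0 0 1 0 0 = (\<lambda>x\<in>F3sq. x)"
proof (rule aff_eqI)
  fix x y :: int assume xy: "(x, y) \<in> F3sq"
  then show "aff 1 0 0 1 0 0 (x, y) = (\<lambda>x\<in>F3sq. x) (x, y)"
    by (simp add: aff_app F3sq_iff)
qed (auto simp: aff_ext)

lemma det1_aux:
  assumes "(a * d - b * c) mod 3 = (1::int)"
  shows "(e * (1 - (a * d - b * c))) mod 3 = 0"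
proof -
  have "(1 - (a * d - b * c)) mod 3 = (1 - (a * d - b * c) mod 3) mod 3" by (rule mod_diff_right_eq[symmetric])
  also have "\<dots> = 0" using assms by simp
  finally have z: "(1 - (a * d - b * c)) mod 3 = 0" .
  have "(e * (1 - (a * d - b * c))) mod 3 = (e * ((1 - (a * d - b * c)) mod 3)) mod 3"
    by (simp add: mod_mult_right_eq)
  also have "\<dots> = 0" using z by simp
  finally show ?thesis .
qed

definition adjp :: "int \<Rightarrow> int \<Rightarrow> int \<Rightarrow> int \<Rightarrow> int \<Rightarrow> int \<Rightarrow> (int \<times> int \<Rightarrow> int \<times> int)" where
  "adjp a b c d e f = aff d (- b) (- c) a (- (d * e - b * f)) (- (a * f - c * e))"

lemma aff_inv_comp1:
  assumes "(a * d - b * c) mod 3 = 1"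
  shows "compose F3sq (adjp a b c d e f) (aff a b c d e f) = (\<lambda>x\<in>F3sq. x)"
  unfolding adjp_def aff_comp aff_id[symmetric]
proof (rule aff_cong)
  show "(d * a + - b * c) mod 3 = 1 mod 3" using assms by (simp add: algebra_simps)
  show "(- c * b + a * d) mod 3 = 1 mod 3" using assms by (simp add: algebra_simps)
qed (simp_all add: algebra_simps)

lemma aff_inv_comp2:
  assumes "(a * d - b * c) mod 3 = 1"
  shows "compose F3sq (aff a b c d e f) (adjp a b c d e f) = (\<lambda>x\<in>F3sq. x)"
  unfolding adjp_def aff_comp aff_id[symmetric]
proof (rule aff_cong)
  show "(a * d + b * - c) mod 3 = 1 mod 3" using assms by (simp add: algebra_simps)
  show "(c * - b + d * a) mod 3 = 1 mod 3" using assms by (simp add: algebra_simps)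
  have "a * - (d * e - b * f) + b * - (a * f - c * e) + e = e * (1 - (a * d - b * c))" by (simp add: algebra_simps)
  then show "(a * - (d * e - b * f) + b * - (a * f - c * e) + e) mod 3 = 0 mod 3" using det1_aux[OF assms, of e] by simp
  have "c * - (d * e - b * f) + d * - (a * f - c * e) + f = f * (1 - (a * d - b * c))" by (simp add: algebra_simps)
  then show "(c * - (d * e - b * f) + d * - (a * f - c * e) + f) mod 3 = 0 mod 3" using det1_aux[OF assms, of f] by simp
qed (simp_all add: algebra_simps)

lemma aff_Bij:
  assumes "(a * d - b * c) mod 3 = 1"
  shows "aff a b c d e f \<in> Bij F3sq"
proof -
  let ?f = "aff a b c d e f" and ?g = "adjp a b c d e f"
  have g_into: "z \<in> F3sq \<Longrightarrow> ?g z \<in> F3sq" for z by (simp add: adjp_def aff_into)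
  have 1: "?g (?f z) = z" if "z \<in> F3sq" for z
    using fun_cong[OF aff_inv_comp1[OF assms, of e f], of z] that by (simp add: compose_def)
  have 2: "?f (?g z) = z" if "z \<in> F3sq" for z
    using fun_cong[OF aff_inv_comp2[OF assms, of e f], of z] that by (simp add: compose_def)
  have "bij_betw ?f F3sq F3sq"
    by (rule bij_betw_byWitness[where f'="?g"]) (use 1 2 aff_into g_into in auto)
  then show ?thesis by (simp add: Bij_def aff_ext)
qed

lemma adjp_det: "(a * d - b * c) mod 3 = (1::int) \<Longrightarrow> (d * a - (- b) * (- c)) mod 3 = 1"
  by (simp add: algebra_simps)

lemma BG_mult: "g \<in> Bij S \<Longrightarrow> h \<in> Bij S \<Longrightarrow> g \<otimes>\<^bsub>BijGroup S\<^esub> h = compose S g h"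
  by (simp add: BijGroup_def)

lemma BG_one: "\<one>\<^bsub>BijGroup S\<^esub> = (\<lambda>x\<in>S. x)"
  by (simp add: BijGroup_def)

lemma det_mult: 
  assumes "(a * d - b * c) mod 3 = (1::int)" "(a2 * d2 - b2 * c2) mod 3 = 1"
  shows "((a * a2 + b * c2) * (c * b2 + d * d2) - (a * b2 + b * d2) * (c * a2 + d * c2)) mod 3 = 1"
proof -
  have "(a * a2 + b * c2) * (c * b2 + d * d2) - (a * b2 + b * d2) * (c * a2 + d * c2) = (a * d - b * c) * (a2 * d2 - b2 * c2)"
    by (simp add: algebra_simps)
  moreover have "((a * d - b * c) * (a2 * d2 - b2 * c2)) mod 3 = (((a * d - b * c) mod 3) * ((a2 * d2 - b2 * c2) mod 3)) mod 3"
    by (simp add: mod_mult_eq)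
  ultimately show ?thesis using assms by simp
qed

lemma ASL_subgroup: "subgroup (carrier ASL23) (BijGroup F3sq)"
proof (rule group.subgroupI[OF group_BijGroup])
  show "carrier ASL23 \<subseteq> carrier (BijGroup F3sq)"
    unfolding carrier_ASL23 by (auto simp: BijGroup_def intro: aff_Bij)
  have "aff 1 0 0 1 0 0 \<in> carrier ASL23" unfolding carrier_ASL23 by force
  then show "carrier ASL23 \<noteq> {}" by blast
next
  fix x assume "x \<in> carrier ASL23"
  then obtain a b c d e f where x: "x = aff a b c d e f" and det: "(a * d - b * c) mod 3 = 1"
    unfolding carrier_ASL23 by blast
  have "inv\<^bsub>BijGroup F3sq\<^esub> x = adjp a b c d e f"
  proof (rule group.inv_equality[OF group_BijGroup])
    have b1: "adjp a b c d e f \<in> Bij F3sq" unfolding adjp_def by (rule aff_Bij[OF adjp_det[OF det]])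
    have b2: "x \<in> Bij F3sq" unfolding x by (rule aff_Bij[OF det])
    show "adjp a b c d e f \<otimes>\<^bsub>BijGroup F3sq\<^esub> x = \<one>\<^bsub>BijGroup F3sq\<^esub>"
      using b1 b2 by (simp add: BG_mult BG_one x aff_inv_comp1[OF det])
    show "x \<in> carrier (BijGroup F3sq)" using b2 by (simp add: BijGroup_def)
    show "adjp a b c d e f \<in> carrier (BijGroup F3sq)" using b1 by (simp add: BijGroup_def)
  qed
  then show "inv\<^bsub>BijGroup F3sq\<^esub> x \<in> carrier ASL23"
    unfolding carrier_ASL23 adjp_def using adjp_det[OF det] by blast
next
  fix x y assume "x \<in> carrier ASL23" "y \<in> carrier ASL23"
  then obtain a b c d e f a2 b2 c2 d2 e2 f2 where x: "x = aff a b c d e f" and det: "(a * d - b * c) mod 3 = 1"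
    and y: "y = aff a2 b2 c2 d2 e2 f2" and det2: "(a2 * d2 - b2 * c2) mod 3 = 1"
    unfolding carrier_ASL23 by blast
  have "x \<otimes>\<^bsub>BijGroup F3sq\<^esub> y = aff (a * a2 + b * c2) (a * b2 + b * d2) (c * a2 + d * c2) (c * b2 + d * d2) (a * e2 + b * f2 + e) (c * e2 + d * f2 + f)"
    using aff_Bij[OF det] aff_Bij[OF det2] by (simp add: BG_mult x y aff_comp)
  then show "x \<otimes>\<^bsub>BijGroup F3sq\<^esub> y \<in> carrier ASL23"
    unfolding carrier_ASL23 using det_mult[OF det det2] by blast
qed

definition gparl :: "((nat \<times> nat) \<times> (int \<times> int \<times> int \<times> int \<times> int \<times> int)) list" where
  "gparl = [((1,2),(1,0,1,1,0,1)), ((1,3),(1,2,0,1,1,0)), ((1,4),(2,2,1,0,1,1)), ((1,5),(2,0,0,2,0,1)),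
            ((2,3),(2,2,1,0,2,2)), ((2,4),(0,2,1,2,2,1)), ((2,5),(2,0,0,2,0,0)), ((3,4),(1,0,1,1,0,0)),
            ((3,5),(2,0,0,2,1,1)), ((4,5),(2,0,0,2,1,2))]"

definition affp :: "int \<times> int \<times> int \<times> int \<times> int \<times> int \<Rightarrow> (int \<times> int \<Rightarrow> int \<times> int)" where
  "affp p = (case p of (a,b,c,d,e,f) \<Rightarrow> aff a b c d e f)"

definition gpar :: "nat \<Rightarrow> nat \<Rightarrow> int \<times> int \<times> int \<times> int \<times> int \<times> int" where
  "gpar i j = the (map_of gparl (i,j))"

definition SG :: "(int \<times> int \<Rightarrow> int \<times> int) set" where
  "SG = {affp (gpar i j) | i j. 1 \<le> i \<and> i < j \<and> j \<le> (5::nat)}"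

abbreviation "HG \<equiv> generate (BijGroup F3sq) SG"

lemma aff_ASL: "(a * d - b * c) mod 3 = 1 \<Longrightarrow> aff a b c d e f \<in> carrier ASL23"
  unfolding carrier_ASL23 by blast

lemma pairs10: "1 \<le> i \<Longrightarrow> i < j \<Longrightarrow> j \<le> (5::nat) \<Longrightarrow>
  (i = 1 \<and> j = 2) \<or> (i = 1 \<and> j = 3) \<or> (i = 1 \<and> j = 4) \<or> (i = 1 \<and> j = 5) \<or> (i = 2 \<and> j = 3) \<or>
  (i = 2 \<and> j = 4) \<or> (i = 2 \<and> j = 5) \<or> (i = 3 \<and> j = 4) \<or> (i = 3 \<and> j = 5) \<or> (i = 4 \<and> j = 5)"
proof -
  assume ij: "1 \<le> i" "i < j" "j \<le> (5::nat)"
  have "j = 2 \<or> j = 3 \<or> j = 4 \<or> j = 5" using ij by arith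
  moreover have "i = 1 \<or> i = 2 \<or> i = 3 \<or> i = 4" using ij by arith
  ultimately show ?thesis using ij by (elim disjE) simp_all
qed

lemma gpar_det: "1 \<le> i \<Longrightarrow> i < j \<Longrightarrow> j \<le> (5::nat) \<Longrightarrow> gpar i j = (a,b,c,d,e,f) \<Longrightarrow> (a * d - b * c) mod 3 = 1"
proof -
  assume ij: "1 \<le> i" "i < j" "j \<le> (5::nat)" and g: "gpar i j = (a,b,c,d,e,f)"
  from pairs10[OF ij] show ?thesis using g by (elim disjE conjE) (simp_all add: gpar_def gparl_def)
qed

lemma SG_sub: "SG \<subseteq> carrier ASL23"
proof
  fix x assume "x \<in> SG"
  then obtain i j where x: "x = affp (gpar i j)" and ij: "1 \<le> i" "i < j" "j \<le> (5::nat)"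
    unfolding SG_def by blast
  obtain a b c d e f where g: "gpar i j = (a,b,c,d,e,f)" by (cases "gpar i j") auto
  show "x \<in> carrier ASL23" unfolding x g affp_def using gpar_det[OF ij g] by (simp add: aff_ASL)
qed

lemma aff_in_SG: "gpar i j = (a,b,c,d,e,f) \<Longrightarrow> 1 \<le> i \<Longrightarrow> i < j \<Longrightarrow> j \<le> 5 \<Longrightarrow> aff a b c d e f \<in> HG"
proof -
  assume g: "gpar i j = (a,b,c,d,e,f)" and ij: "1 \<le> i" "i < j" "j \<le> 5"
  have "affp (gpar i j) \<in> SG" unfolding SG_def using ij by blast
  then have "aff a b c d e f \<in> SG" using g by (simp add: affp_def)
  then show ?thesis by (rule generate.incl)
qed

lemma aff_mult:
  assumes "(a * d - b * c) mod 3 = 1" "(a2 * d2 - b2 * c2) mod 3 = 1"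
  shows "aff a b c d e f \<otimes>\<^bsub>BijGroup F3sq\<^esub> aff a2 b2 c2 d2 e2 f2 =
    aff (a * a2 + b * c2) (a * b2 + b * d2) (c * a2 + d * c2) (c * b2 + d * d2) (a * e2 + b * f2 + e) (c * e2 + d * f2 + f)"
  using aff_Bij[OF assms(1)] aff_Bij[OF assms(2)] by (simp add: BG_mult aff_comp)

lemma HG_pow: "x \<in> HG \<Longrightarrow> x [^]\<^bsub>BijGroup F3sq\<^esub> (n::nat) \<in> HG"
  by (induction n) (auto intro: generate.one generate.eng)

lemma powT: "aff 1 0 0 1 e f [^]\<^bsub>BijGroup F3sq\<^esub> (n::nat) = aff 1 0 0 1 (int n * e) (int n * f)"
proof (induction n)
  case 0 then show ?case by (simp add: BG_one aff_id)
next
  case (Suc n)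
  then show ?case by (simp add: aff_mult algebra_simps)
qed

lemma powU: "aff 1 b 0 1 0 0 [^]\<^bsub>BijGroup F3sq\<^esub> (n::nat) = aff 1 (int n * b) 0 1 0 0"
proof (induction n)
  case 0 then show ?case by (simp add: BG_one aff_id)
next
  case (Suc n)
  then show ?case by (simp add: aff_mult algebra_simps)
qed

lemma powL: "aff 1 0 c 1 0 0 [^]\<^bsub>BijGroup F3sq\<^esub> (n::nat) = aff 1 0 (int n * c) 1 0 0"
proof (induction n)
  case 0 then show ?case by (simp add: BG_one aff_id)
next
  case (Suc n)
  then show ?case by (simp add: aff_mult algebra_simps)
qed

lemma HG_mult: "x \<in> HG \<Longrightarrow> y \<in> HG \<Longrightarrow> x \<otimes>\<^bsub>BijGroup F3sq\<^esub> y \<in> HG"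
  by (rule generate.eng)

lemma g25: "aff 2 0 0 2 0 0 \<in> HG" by (rule aff_in_SG[of 2 5]) (simp_all add: gpar_def gparl_def)
lemma g35: "aff 2 0 0 2 1 1 \<in> HG" by (rule aff_in_SG[of 3 5]) (simp_all add: gpar_def gparl_def)
lemma g45: "aff 2 0 0 2 1 2 \<in> HG" by (rule aff_in_SG[of 4 5]) (simp_all add: gpar_def gparl_def)
lemma g34: "aff 1 0 1 1 0 0 \<in> HG" by (rule aff_in_SG[of 3 4]) (simp_all add: gpar_def gparl_def)
lemma g13: "aff 1 2 0 1 1 0 \<in> HG" by (rule aff_in_SG[of 1 3]) (simp_all add: gpar_def gparl_def)

lemma t11: "aff 1 0 0 1 1 1 \<in> HG"
proof -
  have "aff 2 0 0 2 1 1 \<otimes>\<^bsub>BijGroup F3sq\<^esub> aff 2 0 0 2 0 0 = aff 4 0 0 4 1 1" by (simp add: aff_mult)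
  also have "\<dots> = aff 1 0 0 1 1 1" by (rule aff_cong) simp_all
  finally show ?thesis using HG_mult[OF g35 g25] by simp
qed

lemma t12: "aff 1 0 0 1 1 2 \<in> HG"
proof -
  have "aff 2 0 0 2 1 2 \<otimes>\<^bsub>BijGroup F3sq\<^esub> aff 2 0 0 2 0 0 = aff 4 0 0 4 1 2" by (simp add: aff_mult)
  also have "\<dots> = aff 1 0 0 1 1 2" by (rule aff_cong) simp_all
  finally show ?thesis using HG_mult[OF g45 g25] by simp
qed

lemma transl_in: "aff 1 0 0 1 e f \<in> HG"
proof -
  define m1 where "m1 = nat ((2 * e - f) mod 3)"
  define m2 where "m2 = nat ((f - e) mod 3)"
  have i1: "int m1 = (2 * e - f) mod 3" unfolding m1_def by simp
  have i2: "int m2 = (f - e) mod 3" unfolding m2_def by simp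
  have "aff 1 0 0 1 1 1 [^]\<^bsub>BijGroup F3sq\<^esub> m1 \<otimes>\<^bsub>BijGroup F3sq\<^esub> aff 1 0 0 1 1 2 [^]\<^bsub>BijGroup F3sq\<^esub> m2
      = aff 1 0 0 1 (int m1 + int m2) (int m1 + 2 * int m2)"
    by (simp add: powT aff_mult algebra_simps)
  also have "\<dots> = aff 1 0 0 1 e f"
  proof (rule aff_cong)
    have "(int m1 + int m2) mod 3 = ((2 * e - f) + (f - e)) mod 3" unfolding i1 i2 by (rule mod_add_eq)
    then show "(int m1 + int m2) mod 3 = e mod 3" by simp
    have "(int m1 + 2 * int m2) mod 3 = ((2 * e - f) + 2 * (f - e)) mod 3"
      unfolding i1 i2 by (intro mod_add_cong mod_mult_right_eq mod_mod_trivial)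
    then show "(int m1 + 2 * int m2) mod 3 = f mod 3" by simp
  qed simp_all
  finally have eq: "aff 1 0 0 1 1 1 [^]\<^bsub>BijGroup F3sq\<^esub> m1 \<otimes>\<^bsub>BijGroup F3sq\<^esub> aff 1 0 0 1 1 2 [^]\<^bsub>BijGroup F3sq\<^esub> m2 = aff 1 0 0 1 e f" .
  show ?thesis using HG_mult[OF HG_pow[OF t11, of m1] HG_pow[OF t12, of m2]] by (simp only: eq)
qed

lemma U2: "aff 1 2 0 1 0 0 \<in> HG"
proof -
  have "aff 1 0 0 1 2 0 \<otimes>\<^bsub>BijGroup F3sq\<^esub> aff 1 2 0 1 1 0 = aff 1 2 0 1 3 0" by (simp add: aff_mult)
  also have "\<dots> = aff 1 2 0 1 0 0" by (rule aff_cong) simp_all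
  finally show ?thesis using HG_mult[OF transl_in[of 2 0] g13] by simp
qed

lemma U_in: "u \<ge> 0 \<Longrightarrow> aff 1 u 0 1 0 0 \<in> HG"
proof -
  assume u: "u \<ge> 0"
  have "aff 1 2 0 1 0 0 [^]\<^bsub>BijGroup F3sq\<^esub> nat (2 * u) = aff 1 (int (nat (2 * u)) * 2) 0 1 0 0" by (rule powU)
  also have "\<dots> = aff 1 u 0 1 0 0"
  proof (rule aff_cong)
    have "int (nat (2 * u)) * 2 = 4 * u" using u by simp
    moreover have "(4 * u) mod 3 = u mod 3" unfolding mod_eq_dvd_iff by (rule dvdI[of _ _ u]) simp
    ultimately show "(int (nat (2 * u)) * 2) mod 3 = u mod 3" by simp
  qed simp_all
  finally have eq: "aff 1 2 0 1 0 0 [^]\<^bsub>BijGroup F3sq\<^esub> nat (2 * u) = aff 1 u 0 1 0 0" .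
  show ?thesis using HG_pow[OF U2, of "nat (2 * u)"] by (simp only: eq)
qed

lemma L_in: "c \<ge> 0 \<Longrightarrow> aff 1 0 c 1 0 0 \<in> HG"
proof -
  assume c: "c \<ge> 0"
  have "aff 1 0 1 1 0 0 [^]\<^bsub>BijGroup F3sq\<^esub> nat c = aff 1 0 (int (nat c) * 1) 1 0 0" by (rule powL)
  then show ?thesis using HG_pow[OF g34, of "nat c"] c by simp
qed

lemma lin_fact: "\<forall>a\<in>{0,1,2::int}. \<forall>b\<in>{0,1,2::int}. \<forall>c\<in>{1,2::int}. \<forall>d\<in>{0,1,2::int}. (a * d - b * c) mod 3 = 1 \<longrightarrow>
   (1 + (((a - 1) * c) mod 3) * c) mod 3 = a \<and>
   (((a - 1) * c) mod 3 + (1 + (((a - 1) * c) mod 3) * c) * (((d - 1) * c) mod 3)) mod 3 = b \<and>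
   (c * (((d - 1) * c) mod 3) + 1) mod 3 = d"
  by simp

lemma mod3_range: "(x::int) mod 3 \<in> {0,1,2}"
proof -
  have "0 \<le> x mod 3" "x mod 3 < 3" by simp_all
  then show ?thesis by auto
qed

lemma lin_in_c:
  assumes det: "(a * d - b * c) mod 3 = 1" and c: "c mod 3 \<noteq> 0"
  shows "aff a b c d 0 0 \<in> HG"
proof -
  define a0 where "a0 = a mod 3"
  define b0 where "b0 = b mod 3"
  define c0 where "c0 = c mod 3"
  define d0 where "d0 = d mod 3"
  have ra: "a0 \<in> {0,1,2}" unfolding a0_def by (rule mod3_range)
  have rb: "b0 \<in> {0,1,2}" unfolding b0_def by (rule mod3_range)
  have rc: "c0 \<in> {1,2}" using mod3_range[of c] c unfolding c0_def by auto
  have rd: "d0 \<in> {0,1,2}" unfolding d0_def by (rule mod3_range)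
  have "(a0 * d0 - b0 * c0) mod 3 = (a * d - b * c) mod 3"
    unfolding a0_def b0_def c0_def d0_def by (intro mod_diff_cong mod_mult_cong mod_mod_trivial)
  then have det0: "(a0 * d0 - b0 * c0) mod 3 = 1" using det by simp
  define u where "u = ((a0 - 1) * c0) mod 3"
  define v where "v = ((d0 - 1) * c0) mod 3"
  have F: "(1 + u * c0) mod 3 = a0" "(u + (1 + u * c0) * v) mod 3 = b0" "(c0 * v + 1) mod 3 = d0"
    using lin_fact ra rb rc rd det0 unfolding u_def v_def by blast+
  have u0: "u \<ge> 0" "v \<ge> 0" "c0 \<ge> 0" unfolding u_def v_def c0_def by simp_all
  have "aff 1 u 0 1 0 0 \<otimes>\<^bsub>BijGroup F3sq\<^esub> aff 1 0 c0 1 0 0 = aff (1 + u * c0) u c0 1 0 0"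
    by (simp add: aff_mult)
  then have "aff 1 u 0 1 0 0 \<otimes>\<^bsub>BijGroup F3sq\<^esub> aff 1 0 c0 1 0 0 \<otimes>\<^bsub>BijGroup F3sq\<^esub> aff 1 v 0 1 0 0
     = aff (1 + u * c0) u c0 1 0 0 \<otimes>\<^bsub>BijGroup F3sq\<^esub> aff 1 v 0 1 0 0" by simp
  also have "\<dots> = aff (1 + u * c0) (u + (1 + u * c0) * v) c0 (c0 * v + 1) 0 0"
    by (simp add: aff_mult algebra_simps)
  finally have p1: "aff 1 u 0 1 0 0 \<otimes>\<^bsub>BijGroup F3sq\<^esub> aff 1 0 c0 1 0 0 \<otimes>\<^bsub>BijGroup F3sq\<^esub> aff 1 v 0 1 0 0
     = aff (1 + u * c0) (u + (1 + u * c0) * v) c0 (c0 * v + 1) 0 0" .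
  have m: "a0 mod 3 = a0" "b0 mod 3 = b0" "d0 mod 3 = d0" by (simp_all add: a0_def b0_def d0_def)
  have p2: "aff (1 + u * c0) (u + (1 + u * c0) * v) c0 (c0 * v + 1) 0 0 = aff a0 b0 c0 d0 0 0"
    by (rule aff_cong) (simp_all only: F m)
  have p3: "aff a0 b0 c0 d0 0 0 = aff a b c d 0 0"
    by (rule aff_cong) (simp_all add: a0_def b0_def c0_def d0_def)
  have eq: "aff 1 u 0 1 0 0 \<otimes>\<^bsub>BijGroup F3sq\<^esub> aff 1 0 c0 1 0 0 \<otimes>\<^bsub>BijGroup F3sq\<^esub> aff 1 v 0 1 0 0 = aff a b c d 0 0"
    using p1 p2 p3 by simp
  show ?thesis using HG_mult[OF HG_mult[OF U_in[OF u0(1)] L_in[OF u0(3)]] U_in[OF u0(2)]]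
    by (simp only: eq)
qed

lemma lin_in:
  assumes det: "(a * d - b * c) mod 3 = 1"
  shows "aff a b c d 0 0 \<in> HG"
proof (cases "c mod 3 = 0")
  case False then show ?thesis using lin_in_c[OF det] by simp
next
  case True
  have "(a * d - b * c) mod 3 = ((a mod 3) * d - b * (c mod 3)) mod 3"
    by (intro mod_diff_cong mod_mult_cong mod_mod_trivial[symmetric] refl)
  then have a0: "a mod 3 \<noteq> 0" using det True by auto
  have "(a + c) mod 3 = (a mod 3 + c mod 3) mod 3" by (rule mod_add_eq[symmetric])
  then have ac: "(a + c) mod 3 \<noteq> 0" using True a0 by simp
  have det2: "(a * (b + d) - b * (a + c)) mod 3 = 1" using det by (simp add: algebra_simps)
  have "aff 1 0 2 1 0 0 \<otimes>\<^bsub>BijGroup F3sq\<^esub> aff a b (a + c) (b + d) 0 0 = aff a b (3 * a + c) (3 * b + d) 0 0"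
    using det2 by (simp add: aff_mult algebra_simps)
  also have "\<dots> = aff a b c d 0 0" by (rule aff_cong) simp_all
  finally have eq: "aff 1 0 2 1 0 0 \<otimes>\<^bsub>BijGroup F3sq\<^esub> aff a b (a + c) (b + d) 0 0 = aff a b c d 0 0" .
  show ?thesis using HG_mult[OF L_in[of 2] lin_in_c[OF det2 ac]] by (simp add: eq)
qed

lemma full_in:
  assumes det: "(a * d - b * c) mod 3 = 1"
  shows "aff a b c d e f \<in> HG"
proof -
  have "aff 1 0 0 1 e f \<otimes>\<^bsub>BijGroup F3sq\<^esub> aff a b c d 0 0 = aff a b c d e f"
    using det by (simp add: aff_mult)
  then show ?thesis using HG_mult[OF transl_in[of e f] lin_in[OF det]] by simp
qed

lemma HG_eq: "HG = carrier ASL23"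
proof
  show "HG \<subseteq> carrier ASL23"
    by (rule group.generate_subgroup_incl[OF group_BijGroup SG_sub ASL_subgroup])
  show "carrier ASL23 \<subseteq> HG" unfolding carrier_ASL23 using full_in by blast
qed

definition cnj :: "('a \<Rightarrow> 'b) \<Rightarrow> ('b \<Rightarrow> 'a) \<Rightarrow> 'b set \<Rightarrow> ('a \<Rightarrow> 'a) \<Rightarrow> ('b \<Rightarrow> 'b)" where
  "cnj h h' B f = restrict (\<lambda>y. h (f (h' y))) B"

locale cjset =
  fixes A :: "'a set" and B :: "'b set" and h :: "'a \<Rightarrow> 'b" and h' :: "'b \<Rightarrow> 'a"
  assumes hB: "\<And>x. x \<in> A \<Longrightarrow> h x \<in> B" and h'A: "\<And>y. y \<in> B \<Longrightarrow> h' y \<in> A"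
    and hh: "\<And>x. x \<in> A \<Longrightarrow> h' (h x) = x" and hh': "\<And>y. y \<in> B \<Longrightarrow> h (h' y) = y"
begin

lemma cnj_Bij: assumes f: "f \<in> Bij A" shows "cnj h h' B f \<in> Bij B"
proof -
  have fb: "bij_betw f A A" and fe: "f \<in> extensional A" using f by (auto simp: Bij_def)
  have fA: "\<And>x. x \<in> A \<Longrightarrow> f x \<in> A" using fb bij_betwE by blast
  have finj: "inj_on f A" using fb bij_betw_def by blast
  have inj: "inj_on (cnj h h' B f) B"
  proof (rule inj_onI)
    fix y1 y2 assume y: "y1 \<in> B" "y2 \<in> B" "cnj h h' B f y1 = cnj h h' B f y2"
    then have "h (f (h' y1)) = h (f (h' y2))" by (simp add: cnj_def)
    then have "h' (h (f (h' y1))) = h' (h (f (h' y2)))" by simp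
    then have "f (h' y1) = f (h' y2)" using hh fA h'A y by simp
    then have e: "h' y1 = h' y2" by (rule inj_onD[OF finj _ h'A[OF y(1)] h'A[OF y(2)]])
    have "h (h' y1) = h (h' y2)" using e by simp
    then show "y1 = y2" using hh'[OF y(1)] hh'[OF y(2)] by simp
  qed
  have im: "cnj h h' B f ` B = B"
  proof
    show "cnj h h' B f ` B \<subseteq> B"
    proof
      fix w assume "w \<in> cnj h h' B f ` B"
      then obtain y where y: "y \<in> B" "w = cnj h h' B f y" by blast
      then show "w \<in> B" using hB[OF fA[OF h'A[OF y(1)]]] by (simp add: cnj_def)
    qed
    show "B \<subseteq> cnj h h' B f ` B"
    proof
      fix y assume y: "y \<in> B"
      have fAA: "f ` A = A" using fb by (simp add: bij_betw_def)
      have "h' y \<in> f ` A" unfolding fAA by (rule h'A[OF y])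
      then obtain z where z0: "h' y = f z" "z \<in> A" by (rule imageE)
      then have z: "z \<in> A" "f z = h' y" by simp_all
      have "cnj h h' B f (h z) = h (f (h' (h z)))" using hB z by (simp add: cnj_def)
      also have "\<dots> = y" using z hh hh' y by simp
      finally have cy: "cnj h h' B f (h z) = y" .
      show "y \<in> cnj h h' B f ` B" by (rule image_eqI[where f="cnj h h' B f" and x="h z", OF cy[symmetric] hB[OF z(1)]])
    qed
  qed
  have ext: "cnj h h' B f \<in> extensional B" by (simp add: cnj_def)
  show ?thesis unfolding Bij_def bij_betw_def using inj im ext by blast
qed

lemma cnj_comp: assumes "f \<in> Bij A" "g \<in> Bij A"
  shows "cnj h h' B (compose A f g) = compose B (cnj h h' B f) (cnj h h' B g)"
proof (rule extensionalityI)
  show "cnj h h' B (compose A f g) \<in> extensional B" by (simp add: cnj_def)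
  show "compose B (cnj h h' B f) (cnj h h' B g) \<in> extensional B" by (simp add: compose_def)
  fix y assume y: "y \<in> B"
  have gA: "g (h' y) \<in> A" using assms(2) h'A y by (meson Bij_imp_funcset funcset_mem)
  show "cnj h h' B (compose A f g) y = compose B (cnj h h' B f) (cnj h h' B g) y"
    using y gA hB h'A hh by (simp add: cnj_def compose_def)
qed

lemma cnj_hom: "group_hom (BijGroup A) (BijGroup B) (cnj h h' B)"
proof -
  have "cnj h h' B \<in> hom (BijGroup A) (BijGroup B)"
    unfolding hom_def using cnj_Bij cnj_comp compose_Bij
    by (auto simp: BijGroup_def)
  then show ?thesis
    by (simp add: group_hom_def group_hom_axioms_def group_BijGroup)
qed

lemma cnj_inj: "inj_on (cnj h h' B) (Bij A)"
proof (rule inj_onI)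
  fix f g assume f: "f \<in> Bij A" and g: "g \<in> Bij A" and eq: "cnj h h' B f = cnj h h' B g"
  show "f = g"
  proof (rule extensionalityI)
    show "f \<in> extensional A" "g \<in> extensional A" using f g by (simp_all add: Bij_def)
    fix x assume x: "x \<in> A"
    have "cnj h h' B f (h x) = cnj h h' B g (h x)" using eq by simp
    then have "h (f x) = h (g x)" using x hB hh by (simp add: cnj_def)
    then have "h' (h (f x)) = h' (h (g x))" by simp
    moreover have "f x \<in> A" "g x \<in> A" using f g x by (meson Bij_imp_funcset funcset_mem)+
    ultimately show "f x = g x" using hh by simp
  qed
qed

end

definition e9 :: "nat \<Rightarrow> int \<times> int" where "e9 k = (int (k div 3), int (k mod 3))"
definition einv :: "int \<times> int \<Rightarrow> nat" where "einv p = nat (3 * fst p + snd p)"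

lemma e9_F3: "k < 9 \<Longrightarrow> e9 k \<in> F3sq"
  by (simp add: e9_def F3sq_iff)

lemma F3_cases: "p \<in> F3sq \<Longrightarrow> (\<And>x y. p = (x, y) \<Longrightarrow> (x = 0 \<or> x = 1 \<or> x = 2) \<Longrightarrow> (y = 0 \<or> y = 1 \<or> y = 2) \<Longrightarrow> P) \<Longrightarrow> P"
proof -
  assume p: "p \<in> F3sq" and r: "\<And>x y. p = (x, y) \<Longrightarrow> (x = 0 \<or> x = 1 \<or> x = 2) \<Longrightarrow> (y = 0 \<or> y = 1 \<or> y = 2) \<Longrightarrow> P"
  obtain x y where xy: "p = (x, y)" by (cases p)
  then have "0 \<le> x" "x < 3" "0 \<le> y" "y < 3" using p by (simp_all add: F3sq_iff)
  then have "x = 0 \<or> x = 1 \<or> x = 2" "y = 0 \<or> y = 1 \<or> y = 2" by arith+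
  then show P using r xy by blast
qed

lemma einv_lt: "p \<in> F3sq \<Longrightarrow> einv p < 9"
  by (erule F3_cases) (elim disjE; simp add: einv_def)

lemma e9_einv: "p \<in> F3sq \<Longrightarrow> e9 (einv p) = p"
  by (erule F3_cases) (elim disjE; simp add: einv_def e9_def)

lemma einv_e9: assumes "k < 9" shows "einv (e9 k) = k"
  using less9[OF assms] by (elim disjE) (simp_all add: einv_def e9_def)

lemma aff_check: "list_all (\<lambda>(i,j). list_all (\<lambda>k. e9 (pt i j False k) =
   (case gpar i j of (a,b,c,d,e,f) \<Rightarrow> ((a * fst (e9 k) + b * snd (e9 k) + e) mod 3, (c * fst (e9 k) + d * snd (e9 k) + f) mod 3))) [0..<9]) pairs5"
  by code_simp

lemma inv_check: "list_all (\<lambda>(i,j). list_all (\<lambda>k. pt i j True (pt i j False k) = k \<and> pt i j False (pt i j True k) = k) [0..<9]) pairs5"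
  by code_simp

lemma aff_check': 
  assumes "1 \<le> i" "i < j" "j \<le> 5" "k < 9"
  shows "e9 (pt i j False k) = affp (gpar i j) (e9 k)"
proof -
  have "(i,j) \<in> set pairs5" using assms in_pairs5 by blast
  from bspec[OF aff_check[unfolded list_all_iff] this]
  have c: "e9 (pt i j False k) =
   (case gpar i j of (a,b,c,d,e,f) \<Rightarrow> ((a * fst (e9 k) + b * snd (e9 k) + e) mod 3, (c * fst (e9 k) + d * snd (e9 k) + f) mod 3))"
    using assms(4) by auto
  obtain a b c d e f where g: "gpar i j = (a,b,c,d,e,f)" by (cases "gpar i j") auto
  show ?thesis using c e9_F3[OF assms(4)] unfolding g affp_def
    by (cases "e9 k") (simp add: aff_app)
qed

lemma inv_check':
  assumes "1 \<le> i" "i < j" "j \<le> 5" "k < 9"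
  shows "pt i j True (pt i j False k) = k \<and> pt i j False (pt i j True k) = k"
proof -
  have "(i,j) \<in> set pairs5" using assms in_pairs5 by blast
  from bspec[OF inv_check[unfolded list_all_iff] this]
  show ?thesis using assms(4) by auto
qed

context main begin

definition E :: "'a list set \<Rightarrow> int \<times> int" where "E Y = e9 (the_inv_into {0..<9} Tk Y)"

lemma E_Tk: "k < 9 \<Longrightarrow> E (Tk k) = e9 k"
  using the_inv_into_f_f[OF Tk_inj] by (simp add: E_def)

lemma cjZ: "cjset (Tk ` {0..<9}) F3sq E (\<lambda>p. Tk (einv p))"
proof
  fix x assume "x \<in> Tk ` {0..<9}"
  then obtain k where k: "k < 9" "x = Tk k" by auto
  then show "E x \<in> F3sq" by (simp add: E_Tk e9_F3)
next
  fix y assume "y \<in> F3sq" then show "Tk (einv y) \<in> Tk ` {0..<9}" using einv_lt by auto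
next
  fix x assume "x \<in> Tk ` {0..<9}"
  then obtain k where k: "k < 9" "x = Tk k" by auto
  then show "Tk (einv (E x)) = x" by (simp add: E_Tk einv_e9)
next
  fix y assume y: "y \<in> F3sq" then show "E (Tk (einv y)) = y" using einv_lt[OF y] by (simp add: E_Tk e9_einv)
qed

lemma rb_Tk: 
  assumes "1 \<le> i" "i < j" "j \<le> 5" "k < 9"
  shows "restrict (hur_word_cls G (wd i j e)) (Tk ` {0..<9}) (Tk k) = Tk (pt i j e k)"
    and "pt i j e k < 9"
  using Tk_step[OF assms, of e] assms(4) by auto

lemma rb_Bij:
  assumes ij: "1 \<le> i" "i < j" "j \<le> 5"
  shows "rho_beta G (Tk ` {0..<9}) i j \<in> Bij (Tk ` {0..<9})"
proof -
  let ?Z = "Tk ` {0..<9}"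
  let ?f = "restrict (hur_word_cls G (wd i j False)) ?Z"
  let ?g = "restrict (hur_word_cls G (wd i j True)) ?Z"
  have rb: "rho_beta G ?Z i j = ?f" by (simp add: rho_beta_def wd_def)
  have "bij_betw ?f ?Z ?Z"
  proof (rule bij_betw_byWitness[where f'="?g"])
    show "\<forall>x\<in>?Z. ?g (?f x) = x"
    proof
      fix x assume "x \<in> ?Z"
      then obtain k where k: "k < 9" "x = Tk k" by auto
      show "?g (?f x) = x" using rb_Tk[OF ij k(1), of False] rb_Tk[OF ij _, of "pt i j False k" True]
          inv_check'[OF ij k(1)] k by simp
    qed
    show "\<forall>y\<in>?Z. ?f (?g y) = y"
    proof
      fix x assume "x \<in> ?Z"
      then obtain k where k: "k < 9" "x = Tk k" by auto
      show "?f (?g x) = x" using rb_Tk[OF ij k(1), of True] rb_Tk[OF ij _, of "pt i j True k" False]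
          inv_check'[OF ij k(1)] k by simp
    qed
    show "?f ` ?Z \<subseteq> ?Z"
    proof
      fix y assume "y \<in> ?f ` ?Z"
      then obtain k where k: "k < 9" "y = ?f (Tk k)" by auto
      then show "y \<in> ?Z" using rb_Tk[OF ij k(1), of False] by auto
    qed
    show "?g ` ?Z \<subseteq> ?Z"
    proof
      fix y assume "y \<in> ?g ` ?Z"
      then obtain k where k: "k < 9" "y = ?g (Tk k)" by auto
      then show "y \<in> ?Z" using rb_Tk[OF ij k(1), of True] by auto
    qed
  qed
  then show ?thesis unfolding rb Bij_def by simp
qed

abbreviation Phi where "Phi \<equiv> cnj E (\<lambda>p. Tk (einv p)) F3sq"

lemma Phi_rb:
  assumes ij: "1 \<le> i" "i < j" "j \<le> 5"
  shows "Phi (rho_beta G (Tk ` {0..<9}) i j) = affp (gpar i j)"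
proof (rule extensionalityI)
  show "Phi (rho_beta G (Tk ` {0..<9}) i j) \<in> extensional F3sq" by (simp add: cnj_def)
  show "affp (gpar i j) \<in> extensional F3sq"
    by (cases "gpar i j") (simp add: affp_def aff_ext)
  fix p assume p: "p \<in> F3sq"
  let ?k = "einv p"
  have k: "?k < 9" using einv_lt[OF p] .
  have "Phi (rho_beta G (Tk ` {0..<9}) i j) p = E (rho_beta G (Tk ` {0..<9}) i j (Tk ?k))"
    using p by (simp add: cnj_def)
  also have "\<dots> = E (Tk (pt i j False ?k))"
    using rb_Tk[OF ij k, of False] by (simp add: rho_beta_def wd_def)
  also have "\<dots> = e9 (pt i j False ?k)" using rb_Tk(2)[OF ij k, of False] by (simp add: E_Tk)
  also have "\<dots> = affp (gpar i j) (e9 ?k)" by (rule aff_check'[OF ij k])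
  also have "\<dots> = affp (gpar i j) p" using e9_einv[OF p] by simp
  finally show "Phi (rho_beta G (Tk ` {0..<9}) i j) p = affp (gpar i j) p" .
qed

lemma iso_main: "rho_image G 5 (Tk ` {0..<9}) \<cong> ASL23"
proof -
  let ?Z = "Tk ` {0..<9}"
  let ?GR = "{rho_beta G ?Z i j | i j. 1 \<le> i \<and> i < j \<and> j \<le> (5::nat)}"
  let ?R = "generate (BijGroup ?Z) ?GR"
  interpret cj: cjset ?Z F3sq E "\<lambda>p. Tk (einv p)" by (rule cjZ)
  interpret gh: group_hom "BijGroup ?Z" "BijGroup F3sq" Phi by (rule cj.cnj_hom)
  have GRsub: "?GR \<subseteq> carrier (BijGroup ?Z)" using rb_Bij by (auto simp: BijGroup_def)
  have img: "Phi ` ?GR = SG"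
  proof
    show "Phi ` ?GR \<subseteq> SG"
    proof
      fix x assume "x \<in> Phi ` ?GR"
      then obtain i j where ij: "1 \<le> i" "i < j" "j \<le> (5::nat)" and x: "x = Phi (rho_beta G ?Z i j)" by blast
      have "x = affp (gpar i j)" using x Phi_rb[OF ij] by simp
      then show "x \<in> SG" unfolding SG_def using ij by blast
    qed
    show "SG \<subseteq> Phi ` ?GR"
    proof
      fix x assume "x \<in> SG"
      then obtain i j where ij: "1 \<le> i" "i < j" "j \<le> (5::nat)" and x: "x = affp (gpar i j)"
        unfolding SG_def by blast
      have "x = Phi (rho_beta G ?Z i j)" using x Phi_rb[OF ij] by simp
      moreover have "rho_beta G ?Z i j \<in> ?GR" using ij by blast
      ultimately show "x \<in> Phi ` ?GR" by (rule image_eqI)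
    qed
  qed
  have Rsub: "?R \<subseteq> carrier (BijGroup ?Z)" using gh.G.generate_incl[OF GRsub] .
  have RI: "Phi ` ?R = carrier ASL23"
    using gh.generate_img[OF GRsub] img HG_eq by simp
  have crho: "carrier (rho_image G 5 ?Z) = ?R" by (simp add: rho_image_def)
  have mrho: "monoid.mult (rho_image G 5 ?Z) = monoid.mult (BijGroup ?Z)" by (simp add: rho_image_def)
  have masl: "monoid.mult ASL23 = monoid.mult (BijGroup F3sq)" by (simp add: ASL23_def)
  have "Phi \<in> iso (rho_image G 5 ?Z) ASL23"
    unfolding iso_def hom_def
  proof (intro CollectI conjI)
    show "Phi \<in> carrier (rho_image G 5 ?Z) \<rightarrow> carrier ASL23"
    proof
      fix x assume "x \<in> carrier (rho_image G 5 ?Z)"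
      then have "Phi x \<in> Phi ` ?R" unfolding crho by (rule imageI)
      then show "Phi x \<in> carrier ASL23" unfolding RI .
    qed
    show "\<forall>x\<in>carrier (rho_image G 5 ?Z). \<forall>y\<in>carrier (rho_image G 5 ?Z).
        Phi (x \<otimes>\<^bsub>rho_image G 5 ?Z\<^esub> y) = Phi x \<otimes>\<^bsub>ASL23\<^esub> Phi y"
    proof (intro ballI)
      fix x y assume x: "x \<in> carrier (rho_image G 5 ?Z)" and y: "y \<in> carrier (rho_image G 5 ?Z)"
      have x': "x \<in> carrier (BijGroup ?Z)" using x Rsub crho by blast
      have y': "y \<in> carrier (BijGroup ?Z)" using y Rsub crho by blast
      show "Phi (x \<otimes>\<^bsub>rho_image G 5 ?Z\<^esub> y) = Phi x \<otimes>\<^bsub>ASL23\<^esub> Phi y"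
        unfolding mrho masl by (rule gh.hom_mult[OF x' y'])
    qed
    show "bij_betw Phi (carrier (rho_image G 5 ?Z)) (carrier ASL23)"
    proof -
      have "?R \<subseteq> Bij ?Z" using Rsub by (simp add: BijGroup_def)
      then have "inj_on Phi ?R" by (rule inj_on_subset[OF cj.cnj_inj])
      then show ?thesis unfolding crho bij_betw_def using RI by blast
    qed
  qed
  then show ?thesis by (rule is_isoI)
qed

end

context main begin

lemma ct_gen:
  assumes ij: "1 \<le> i" "i < j" "j \<le> 5"
  shows "cycle_type (rho_beta G (Tk ` {0..<9}) i j) (Tk ` {0..<9}) = cycle_type (pt i j False) {0..<9}"
    and "num_cycles (rho_beta G (Tk ` {0..<9}) i j) (Tk ` {0..<9}) = num_cycles (pt i j False) {0..<9}"
proof -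
  have f: "\<forall>k\<in>{0..<9}. hur_word_cls G (beta_word i j) (Tk k) = Tk (pt i j False k)"
    using Tk_step[OF ij, of _ False] by (simp add: wd_def)
  have p: "\<forall>k\<in>{0..<9}. pt i j False k \<in> {0..<9}"
    using Tk_step[OF ij, of _ False] by simp
  show "cycle_type (rho_beta G (Tk ` {0..<9}) i j) (Tk ` {0..<9}) = cycle_type (pt i j False) {0..<9}"
    unfolding rho_beta_def by (rule transfer_cycles(1)[OF Tk_inj f p]) simp
  show "num_cycles (rho_beta G (Tk ` {0..<9}) i j) (Tk ` {0..<9}) = num_cycles (pt i j False) {0..<9}"
    unfolding rho_beta_def by (rule transfer_cycles(2)[OF Tk_inj f p]) simp
qed

lemma ct_small:
  assumes "1 \<le> i" "i < j" "j \<le> 4"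
  shows "cycle_type (rho_beta G (Tk ` {0..<9}) i j) (Tk ` {0..<9}) = {#1, 1, 1, 3, 3#}"
proof -
  have ij: "1 \<le> i" "i < j" "j \<le> 5" using assms by simp_all
  have "(i = 1 \<and> j = 2) \<or> (i = 1 \<and> j = 3) \<or> (i = 1 \<and> j = 4) \<or> (i = 2 \<and> j = 3) \<or> (i = 2 \<and> j = 4) \<or> (i = 3 \<and> j = 4)"
    using pairs10[OF ij] assms(3) by auto
  then show ?thesis unfolding ct_gen(1)[OF ij]
    by (elim disjE conjE) (simp_all only: ct12 ct13 ct14 ct23 ct24 ct34)
qed

lemma ct_five:
  assumes "1 \<le> i" "i < 5"
  shows "cycle_type (rho_beta G (Tk ` {0..<9}) i 5) (Tk ` {0..<9}) = {#1, 2, 2, 2, 2#}"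
proof -
  have ij: "1 \<le> i" "i < 5" "5 \<le> (5::nat)" using assms by simp_all
  have "i = 1 \<or> i = 2 \<or> i = 3 \<or> i = 4" using assms by arith
  then show ?thesis unfolding ct_gen(1)[OF ij]
    by (elim disjE) (simp_all only: ct15 ct25 ct35 ct45)
qed

lemma nc1: 
  assumes "j \<in> {2..5}"
  shows "num_cycles (rho_beta G (Tk ` {0..<9}) 1 j) (Tk ` {0..<9}) = 5"
proof -
  have ij: "1 \<le> (1::nat)" "1 < j" "j \<le> 5" using assms by auto
  have "j = 2 \<or> j = 3 \<or> j = 4 \<or> j = 5" using assms by auto
  then have "cycle_type (pt 1 j False) {0..<9} = {#1, 1, 1, 3, 3#} \<or> cycle_type (pt 1 j False) {0..<9} = {#1, 2, 2, 2, 2#}"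
    by (elim disjE) (simp_all only: ct12 ct13 ct14 ct15 simp_thms)
  then have "size (cycle_type (pt 1 j False) {0..<9}) = 5" by auto
  then show ?thesis unfolding num_cycles_size ct_gen(1)[OF ij] .
qed

lemma main_result:
  "let C = conj_class G (ev [False,False,True]); D = conj_class G (ev [True,False,True]);
       Z = pure_orbit G 5 (Tk 0)
   in Z \<subseteq> Sigma_i G [C, C, C, C, D]
    \<and> card Z = 9
    \<and> (\<forall>i j. 1 \<le> i \<and> i < j \<and> j \<le> 4 \<longrightarrow> cycle_type (rho_beta G Z i j) Z = {#1, 1, 1, 3, 3#})
    \<and> (\<forall>i. 1 \<le> i \<and> i < 5 \<longrightarrow> cycle_type (rho_beta G Z i 5) Z = {#1, 2, 2, 2, 2#})
    \<and> rho_image G 5 Z \<cong> ASL23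
    \<and> genus G 5 Z = 0"
proof -
  have c9: "card (Tk ` {0..<9}) = 9" using card_image[OF Tk_inj] by simp
  have sub: "Tk ` {0..<9} \<subseteq> Sigma_i G [conj_class G (ev [False,False,True]), conj_class G (ev [False,False,True]),
      conj_class G (ev [False,False,True]), conj_class G (ev [False,False,True]), conj_class G (ev [True,False,True])]"
    using Tk_Sigma by auto
  have s: "(\<Sum>j = 2..5. real (num_cycles (rho_beta G (Tk ` {0..<9}) 1 j) (Tk ` {0..<9}))) = 20"
  proof -
    have "(\<Sum>j = 2..5. real (num_cycles (rho_beta G (Tk ` {0..<9}) 1 j) (Tk ` {0..<9}))) = (\<Sum>j = (2::nat)..5. 5)"
    proof (rule sum.cong)
      fix x :: nat assume "x \<in> {2..5}"
      then show "real (num_cycles (rho_beta G (Tk ` {0..<9}) 1 x) (Tk ` {0..<9})) = 5" using nc1[of x] by simp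
    qed simp
    then show ?thesis by simp
  qed
  have g: "genus G 5 (Tk ` {0..<9}) = 0" unfolding genus_def c9 s by simp
  show ?thesis unfolding Let_def orbit_eq
    using sub c9 ct_small ct_five iso_main g by blast
qed

end

lemma (in group) theorem10_aux:
  fixes s1 s2 :: 'a
  assumes "finite (carrier G)"
    and "carrier G \<noteq> {\<one>\<^bsub>G\<^esub>}"
    and "center G = {\<one>\<^bsub>G\<^esub>}"
    and "s1 \<in> carrier G" and "s2 \<in> carrier G"
    and "generate G {s1, s2} = carrier G"
    and "group.ord G (s1 \<otimes>\<^bsub>G\<^esub> s2 \<otimes>\<^bsub>G\<^esub> s1) = 2"
    and "s1 \<otimes>\<^bsub>G\<^esub> s2 \<otimes>\<^bsub>G\<^esub> s1 = s2 \<otimes>\<^bsub>G\<^esub> s1 \<otimes>\<^bsub>G\<^esub> s2"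
  shows "let C = conj_class G s1; D = conj_class G (s2 \<otimes>\<^bsub>G\<^esub> s1);
             Z = pure_orbit G 5 (tuple_class G [s1, s2, s1, s1, s2 \<otimes>\<^bsub>G\<^esub> s1])
         in Z \<subseteq> Sigma_i G [C, C, C, C, D]
          \<and> card Z = 9
          \<and> (\<forall>i j. 1 \<le> i \<and> i < j \<and> j \<le> 4 \<longrightarrow>
                 cycle_type (rho_beta G Z i j) Z = {#1, 1, 1, 3, 3#})
          \<and> (\<forall>i. 1 \<le> i \<and> i < 5 \<longrightarrow>
                 cycle_type (rho_beta G Z i 5) Z = {#1, 2, 2, 2, 2#})
          \<and> rho_image G 5 Z \<cong> ASL23
          \<and> genus G 5 Z = 0"
proof -
  have s1: "s1 \<in> carrier G" and s2: "s2 \<in> carrier G" using assms(4,5) .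
  define a where "a = s1 \<otimes> s2 \<otimes> s1"
  define b where "b = s1 \<otimes> s2"
  have ac: "a \<in> carrier G" and bc: "b \<in> carrier G" using s1 s2 by (simp_all add: a_def b_def)
  have "a [^] ord a = \<one>" using ac by (rule pow_ord_eq_1)
  then have "a [^] (2::nat) = \<one>" using assms(7) by (simp add: a_def)
  then have aa: "a \<otimes> a = \<one>" using ac by (simp add: numeral_2_eq_2)
  have braid: "s1 \<otimes> s2 \<otimes> s1 = s2 \<otimes> s1 \<otimes> s2" by (rule assms(8))
  have "b \<otimes> b \<otimes> b = (s1 \<otimes> s2 \<otimes> s1) \<otimes> (s2 \<otimes> s1 \<otimes> s2)"
    using s1 s2 by (simp add: b_def m_assoc)
  also have "\<dots> = a \<otimes> a" using braid by (simp add: a_def)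
  finally have bbb: "b \<otimes> b \<otimes> b = \<one>" using aa by simp
  interpret S: setting G a b
    by (unfold_locales) (simp_all add: ac bc aa bbb)
  have ev1: "S.ev [False,False,True] = s1"
  proof -
    have "S.ev [False,False,True] = b \<otimes> (b \<otimes> a)" using ac bc by (simp add: S.ev_Cons)
    also have "\<dots> = (s1 \<otimes> s2 \<otimes> s1) \<otimes> (s2 \<otimes> s1 \<otimes> s2) \<otimes> s1"
      using s1 s2 by (simp add: a_def b_def m_assoc)
    also have "\<dots> = a \<otimes> a \<otimes> s1" using braid by (simp add: a_def)
    also have "\<dots> = s1" using aa s1 by simp
    finally show ?thesis .
  qed
  have ev2: "S.ev [True,False,False] = s2"
  proof -
    have ib: "inv b = b \<otimes> b" using bbb bc by (simp add: inv_equality)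
    have "S.ev [True,False,False] = a \<otimes> (b \<otimes> b)" using ac bc by (simp add: S.ev_Cons)
    also have "\<dots> = a \<otimes> inv b" using ib by simp
    also have "\<dots> = (s2 \<otimes> s1 \<otimes> s2) \<otimes> (inv s2 \<otimes> inv s1)"
      using s1 s2 braid by (simp add: a_def b_def inv_mult_group)
    also have "\<dots> = s2" using s1 s2 by (simp add: m_assoc inv_cancel_r)
    finally show ?thesis .
  qed
  have ev3: "S.ev [True,False,True] = s2 \<otimes> s1"
  proof -
    have e1: "S.ev [True,False,True] = S.ev ([True,False,False] @ [False,False,True])"
      by (rule S.ev_eqI) simp
    have e2: "S.ev ([True,False,False] @ [False,False,True]) = S.ev [True,False,False] \<otimes> S.ev [False,False,True]"
      by (rule S.ev_append)
    show ?thesis using e1 e2 ev1 ev2 by simp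
  qed
  interpret M: main G a b
    by (unfold_locales) (simp_all add: ev1 ev2 assms(2,3,6))
  have T0: "tuple_class G [s1, s2, s1, s1, s2 \<otimes> s1] = M.Tk 0"
    by (simp add: M.Tk_def reps_def ev1 ev2 ev3)
  show ?thesis using M.main_result unfolding Let_def ev1 ev3 T0[symmetric] .
qed


theorem theorem10:
  fixes G :: "('a, 'b) monoid_scheme" and s1 s2 :: 'a
  assumes "group G"
    and "finite (carrier G)"
    and "carrier G \<noteq> {\<one>\<^bsub>G\<^esub>}"
    and "center G = {\<one>\<^bsub>G\<^esub>}"
    and "s1 \<in> carrier G" and "s2 \<in> carrier G"
    and "generate G {s1, s2} = carrier G"
    and "group.ord G (s1 \<otimes>\<^bsub>G\<^esub> s2 \<otimes>\<^bsub>G\<^esub> s1) = 2"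
    and "s1 \<otimes>\<^bsub>G\<^esub> s2 \<otimes>\<^bsub>G\<^esub> s1 = s2 \<otimes>\<^bsub>G\<^esub> s1 \<otimes>\<^bsub>G\<^esub> s2"
  shows "let C = conj_class G s1; D = conj_class G (s2 \<otimes>\<^bsub>G\<^esub> s1);
             Z = pure_orbit G 5 (tuple_class G [s1, s2, s1, s1, s2 \<otimes>\<^bsub>G\<^esub> s1])
         in Z \<subseteq> Sigma_i G [C, C, C, C, D]
          \<and> card Z = 9
          \<and> (\<forall>i j. 1 \<le> i \<and> i < j \<and> j \<le> 4 \<longrightarrow>
                 cycle_type (rho_beta G Z i j) Z = {#1, 1, 1, 3, 3#})
          \<and> (\<forall>i. 1 \<le> i \<and> i < 5 \<longrightarrow>
                 cycle_type (rho_beta G Z i 5) Z = {#1, 2, 2, 2, 2#})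
          \<and> rho_image G 5 Z \<cong> ASL23
          \<and> genus G 5 Z = 0"
  using group.theorem10_aux[OF assms] .

end
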